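(* Let $\{e^{t\mathcal{L}}\}_{t\ge0}$ be a quantum dynamical semigroup of unital quantum channels on $M_d$. The following are equivalent: (i) $e^{t\mathcal{L}}$ is mixed Weyl-unitary for every $t\ge0$; (ii) $\mathcal{L}$ is a non-negative linear combination of maps of the form $\mathrm{Ad}_W-\mathrm{id}$ with $W$ a Weyl unitary; (iii) $\mathcal{L}$ is Weyl-covariant.
   Context: Index the standard basis of $\mathbb{C}^d$ by $\mathbb{Z}_d$, let $\xi=e^{2\pi i/d}$, $Ue_j=e_{j+1}$, $Ve_j=\xi^je_j$, and Weyl unitaries $W_{a,b}=U^aV^b$, $a,b\in\mathbb{Z}_d$. $\mathrm{Ad}_W(X)=W^*XW$. A linear map $\Phi$ on $M_d$ is mixed Weyl-unitary if $\Phi(X)=\sum_i\lambda_iU_iXU_i^*$ with $\lambda_i\ge0$, $\sum_i\lambda_i=1$ and each $U_i$ a Weyl unitary; it is Weyl-covariant if $\Phi(W_{a,b}XW_{a,b}^* )=W_{a,b}\Phi(X)W_{a,b}^*$ for all $X\in M_d$ and $a,b\in\mathbb{Z}_d$. A quantum dynamical semigroup of unital quantum channels is a family $\{\Phi_t=e^{t\mathcal{L}}\}_{t\ge0}$ of completely positive, unital, trace-preserving maps with $\Phi_0=\mathrm{id}$, $\Phi_s\Phi_t=\Phi_{s+t}$, continuous in $t$; $\mathcal{L}$ is its generator. *)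

theory Defs
  imports "HOL-Analysis.Analysis" "Jordan_Normal_Form.Schur_Decomposition"
begin

(* Matrices in M_d are  complex mat  values in  carrier_mat d d;
   linear maps on M_d are functions  complex mat \<Rightarrow> complex mat,
   only their behaviour on carrier_mat d d matters. *)

definition mtrace :: "complex mat \<Rightarrow> complex" where
  "mtrace A = (\<Sum>i<dim_row A. A $$ (i,i))"

definition psd :: "nat \<Rightarrow> complex mat \<Rightarrow> bool" where
  "psd n A \<longleftrightarrow> A \<in> carrier_mat n n \<and>
     (\<forall>v :: nat \<Rightarrow> complex.
        Im (\<Sum>i<n. \<Sum>j<n. cnj (v i) * A $$ (i,j) * v j) = 0 \<and>
        0 \<le> Re (\<Sum>i<n. \<Sum>j<n. cnj (v i) * A $$ (i,j) * v j))"

definition linear_on_Md :: "nat \<Rightarrow> (complex mat \<Rightarrow> complex mat) \<Rightarrow> bool" where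
  "linear_on_Md d \<Phi> \<longleftrightarrow>
     (\<forall>X \<in> carrier_mat d d. \<Phi> X \<in> carrier_mat d d) \<and>
     (\<forall>X \<in> carrier_mat d d. \<forall>Y \<in> carrier_mat d d. \<Phi> (X + Y) = \<Phi> X + \<Phi> Y) \<and>
     (\<forall>c. \<forall>X \<in> carrier_mat d d. \<Phi> (c \<cdot>\<^sub>m X) = c \<cdot>\<^sub>m \<Phi> X)"

(* id_{M_n} \<otimes> \<Phi> applied to an element of M_n(M_d) = M_{nd} (block (p,q) is a d x d block) *)
definition ampliate :: "nat \<Rightarrow> nat \<Rightarrow> (complex mat \<Rightarrow> complex mat) \<Rightarrow> complex mat \<Rightarrow> complex mat" where
  "ampliate n d \<Phi> X = mat (n*d) (n*d) (\<lambda>(r,s).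
      \<Phi> (mat d d (\<lambda>(k,l). X $$ ((r div d) * d + k, (s div d) * d + l))) $$ (r mod d, s mod d))"

definition completely_positive :: "nat \<Rightarrow> (complex mat \<Rightarrow> complex mat) \<Rightarrow> bool" where
  "completely_positive d \<Phi> \<longleftrightarrow>
     (\<forall>n X. psd (n*d) X \<longrightarrow> psd (n*d) (ampliate n d \<Phi> X))"

definition unital_channel :: "nat \<Rightarrow> (complex mat \<Rightarrow> complex mat) \<Rightarrow> bool" where
  "unital_channel d \<Phi> \<longleftrightarrow> linear_on_Md d \<Phi> \<and> completely_positive d \<Phi> \<and>
     \<Phi> (1\<^sub>m d) = 1\<^sub>m d \<and> (\<forall>X \<in> carrier_mat d d. mtrace (\<Phi> X) = mtrace X)"

definition qds_unital :: "nat \<Rightarrow> (real \<Rightarrow> complex mat \<Rightarrow> complex mat) \<Rightarrow> bool" where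
  "qds_unital d \<Phi> \<longleftrightarrow>
     (\<forall>t\<ge>0. unital_channel d (\<Phi> t)) \<and>
     (\<forall>X \<in> carrier_mat d d. \<Phi> 0 X = X) \<and>
     (\<forall>s\<ge>0. \<forall>t\<ge>0. \<forall>X \<in> carrier_mat d d. \<Phi> s (\<Phi> t X) = \<Phi> (s + t) X) \<and>
     (\<forall>X \<in> carrier_mat d d. \<forall>i<d. \<forall>j<d. continuous_on {0..} (\<lambda>t. \<Phi> t X $$ (i,j)))"

(* L is the generator: L X = d/dt|_{t=0+} \<Phi>_t X (so that \<Phi>_t = e^{tL}) *)
definition generator :: "nat \<Rightarrow> (real \<Rightarrow> complex mat \<Rightarrow> complex mat) \<Rightarrow> (complex mat \<Rightarrow> complex mat) \<Rightarrow> bool" where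
  "generator d \<Phi> L \<longleftrightarrow>
     (\<forall>X \<in> carrier_mat d d. L X \<in> carrier_mat d d \<and>
        (\<forall>i<d. \<forall>j<d. ((\<lambda>t. \<Phi> t X $$ (i,j)) has_vector_derivative (L X $$ (i,j))) (at_right 0)))"

definition xi :: "nat \<Rightarrow> complex" where
  "xi d = cis (2 * pi / real d)"

definition shiftU :: "nat \<Rightarrow> complex mat" where
  "shiftU d = mat d d (\<lambda>(i,j). if i = (j + 1) mod d then 1 else 0)"

definition clockV :: "nat \<Rightarrow> complex mat" where
  "clockV d = mat d d (\<lambda>(i,j). if i = j then xi d ^ j else 0)"

definition weyl :: "nat \<Rightarrow> nat \<Rightarrow> nat \<Rightarrow> complex mat" where
  "weyl d a b = shiftU d ^\<^sub>m a * clockV d ^\<^sub>m b"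

definition Ad :: "complex mat \<Rightarrow> complex mat \<Rightarrow> complex mat" where
  "Ad W X = mat_adjoint W * X * W"

definition mixed_weyl_unitary :: "nat \<Rightarrow> (complex mat \<Rightarrow> complex mat) \<Rightarrow> bool" where
  "mixed_weyl_unitary d \<Phi> \<longleftrightarrow>
     (\<exists>(n::nat) (lam :: nat \<Rightarrow> real) (ab :: nat \<Rightarrow> nat \<times> nat).
        (\<forall>k<n. 0 \<le> lam k \<and> fst (ab k) < d \<and> snd (ab k) < d) \<and> (\<Sum>k<n. lam k) = 1 \<and>
        (\<forall>X \<in> carrier_mat d d. \<Phi> X = mat d d (\<lambda>(i,j). \<Sum>k<n. complex_of_real (lam k) *
            ((weyl d (fst (ab k)) (snd (ab k)) * X * mat_adjoint (weyl d (fst (ab k)) (snd (ab k)))) $$ (i,j)))))"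

definition nonneg_comb_Ad_minus_id :: "nat \<Rightarrow> (complex mat \<Rightarrow> complex mat) \<Rightarrow> bool" where
  "nonneg_comb_Ad_minus_id d L \<longleftrightarrow>
     (\<exists>(n::nat) (c :: nat \<Rightarrow> real) (ab :: nat \<Rightarrow> nat \<times> nat).
        (\<forall>k<n. 0 \<le> c k \<and> fst (ab k) < d \<and> snd (ab k) < d) \<and>
        (\<forall>X \<in> carrier_mat d d. L X = mat d d (\<lambda>(i,j). \<Sum>k<n. complex_of_real (c k) *
            ((Ad (weyl d (fst (ab k)) (snd (ab k))) X - X) $$ (i,j)))))"

definition weyl_covariant :: "nat \<Rightarrow> (complex mat \<Rightarrow> complex mat) \<Rightarrow> bool" where
  "weyl_covariant d \<Phi> \<longleftrightarrow>
     (\<forall>a<d. \<forall>b<d. \<forall>X \<in> carrier_mat d d.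
        \<Phi> (weyl d a b * X * mat_adjoint (weyl d a b)) = weyl d a b * \<Phi> X * mat_adjoint (weyl d a b))"

end

theory Submission
  imports Defs
begin


lemma mat_adjoint_eq: "A \<in> carrier_mat n m \<Longrightarrow> mat_adjoint A = mat m n (\<lambda>(i,j). cnj (A $$ (j,i)))"
  by (rule eq_matI) (auto simp: mat_adjoint_def mat_of_rows_def)

lemma mat_adjoint_dims[simp]: "dim_row (mat_adjoint A) = dim_col A" "dim_col (mat_adjoint A) = dim_row A"
  by (simp_all add: mat_adjoint_def)

definition om :: "nat \<Rightarrow> int \<Rightarrow> complex" where
  "om d n = cis (2 * pi * of_int n / real d)"

lemma om_add: "om d (m + n) = om d m * om d n"
  by (simp add: om_def cis_mult add_divide_distrib algebra_simps)

lemma om_0[simp]: "om d 0 = 1"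
  by (simp add: om_def)

lemma om_cnj: "cnj (om d n) = om d (- n)"
  by (simp add: om_def cis_cnj)

lemma om_period: "0 < d \<Longrightarrow> om d (n + int d * k) = om d n"
proof -
  assume d: "0 < d"
  have "2 * pi * of_int (n + int d * k) / real d = 2 * pi * of_int n / real d + 2 * pi * of_int k"
    using d by (simp add: field_simps)
  moreover have "cis (2 * pi * of_int k) = 1"
    by (rule cis_multiple_2pi) simp
  ultimately show ?thesis by (simp add: om_def cis_mult[symmetric])
qed

lemma om_mod: "0 < d \<Longrightarrow> om d (n mod int d) = om d n"
  using om_period[of d "n mod int d" "n div int d"] by simp

lemma om_cong: "0 < d \<Longrightarrow> m mod int d = n mod int d \<Longrightarrow> om d m = om d n"
  by (metis om_mod)

lemma om_pow: "om d n ^ k = om d (int k * n)"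
  by (induct k) (auto simp: om_add distrib_right)

lemma xi_pow: "xi d ^ k = om d (int k)"
  by (simp only: xi_def om_def Complex.DeMoivre) (simp add: field_simps)

lemma om_eq_1: "0 < d \<Longrightarrow> om d m = 1 \<Longrightarrow> int d dvd m"
proof -
  assume d: "0 < d" and h: "om d m = 1"
  hence "cos (2 * pi * of_int m / real d) = 1"
    unfolding om_def by (metis cis.sel(1) one_complex.sel(1))
  then obtain n :: int where n: "2 * pi * of_int m / real d = n * 2 * pi"
    by (auto simp: cos_one_2pi_int)
  hence "of_int m = real d * n" using d by (simp add: field_simps)
  hence "m = int d * n" by (metis of_int_eq_iff of_int_mult of_int_of_nat_eq)
  thus ?thesis by simp
qed

lemma om_sum: "0 < d \<Longrightarrow> (\<Sum>e<d. om d (int e * m)) = (if int d dvd m then of_nat d else 0)"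
proof -
  assume d: "0 < d"
  have eq: "(\<Sum>e<d. om d (int e * m)) = (\<Sum>e<d. om d m ^ e)"
    by (simp add: om_pow)
  show ?thesis
  proof (cases "int d dvd m")
    case True
    then obtain k where "m = int d * k" by auto
    hence "om d m = 1" using om_period[OF d, of 0 k] by simp
    thus ?thesis using True eq by simp
  next
    case False
    hence ne: "om d m \<noteq> 1" using om_eq_1[OF d] by blast
    have "om d m ^ d = 1" using om_period[OF d, of 0 m] by (simp add: om_pow)
    thus ?thesis using False eq geometric_sum[OF ne, of d] by simp
  qed
qed

lemma mult_entry: "A \<in> carrier_mat n m \<Longrightarrow> B \<in> carrier_mat m p \<Longrightarrow> i < n \<Longrightarrow> j < p \<Longrightarrow>
  (A * B) $$ (i,j) = (\<Sum>k<m. A $$ (i,k) * B $$ (k,j))"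
  by (auto simp: index_mult_mat scalar_prod_def atLeast0LessThan intro!: sum.cong)

lemma sum_pick_r: "(c::nat) < m \<Longrightarrow> (\<Sum>k<m. f k * (if k = c then 1 else 0)) = (f c :: 'a::semiring_1)"
proof -
  assume c: "c < m"
  have "(\<Sum>k<m. f k * (if k = c then 1 else 0)) = (\<Sum>k<m. if k = c then f k else 0)"
    by (rule sum.cong) auto
  also have "\<dots> = f c" using c by simp
  finally show ?thesis .
qed

lemma sum_pick_gen: "(c::nat) < m \<Longrightarrow> (\<And>k. k < m \<Longrightarrow> P k \<longleftrightarrow> k = c) \<Longrightarrow>
   (\<Sum>k<m. if P k then f k else 0) = (f c :: 'a::comm_monoid_add)"
proof -
  assume c: "c < m" and P: "\<And>k. k < m \<Longrightarrow> P k \<longleftrightarrow> k = c"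
  have "(\<Sum>k<m. if P k then f k else 0) = (\<Sum>k<m. if k = c then f k else 0)"
    by (rule sum.cong) (auto simp: P)
  also have "\<dots> = f c" using c by simp
  finally show ?thesis .
qed

definition md :: "nat \<Rightarrow> int \<Rightarrow> nat" where "md d i = nat (i mod int d)"

lemma md_lt[simp]: "0 < d \<Longrightarrow> md d i < d"
  unfolding md_def by (simp add: nat_less_iff)

lemma int_md: "0 < d \<Longrightarrow> int (md d i) = i mod int d"
  unfolding md_def by simp

lemma md_nat[simp]: "j < d \<Longrightarrow> md d (int j) = j"
  unfolding md_def by simp

lemma md_eq_iff: "0 < d \<Longrightarrow> md d i = md d j \<longleftrightarrow> i mod int d = j mod int d"
  unfolding md_def by (simp add: nat_eq_iff)

lemma md_shift_iff: "0 < d \<Longrightarrow> i < d \<Longrightarrow> r < d \<Longrightarrow> (r = md d (int i + a)) \<longleftrightarrow> (i = md d (int r - a))"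
proof -
  assume d: "0 < d" and i: "i < d" and r: "r < d"
  have "r = md d (int i + a) \<longleftrightarrow> int r mod int d = (int i + a) mod int d"
    using d r by (metis md_eq_iff md_nat)
  also have "\<dots> \<longleftrightarrow> (int r - a) mod int d = int i mod int d"
    by (metis add_diff_cancel_right' diff_add_cancel mod_diff_left_eq mod_add_left_eq)
  also have "\<dots> \<longleftrightarrow> i = md d (int r - a)"
    using d i by (metis md_eq_iff md_nat)
  finally show ?thesis .
qed

lemma shiftU_carrier[simp]: "shiftU d \<in> carrier_mat d d"
  by (simp add: shiftU_def)
lemma clockV_carrier[simp]: "clockV d \<in> carrier_mat d d"
  by (simp add: clockV_def)
lemma shiftU_dims[simp]: "dim_row (shiftU d) = d" "dim_col (shiftU d) = d"
  by (simp_all add: shiftU_def)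
lemma clockV_dims[simp]: "dim_row (clockV d) = d" "dim_col (clockV d) = d"
  by (simp_all add: clockV_def)
lemma shiftU_pow_carrier[simp]: "shiftU d ^\<^sub>m a \<in> carrier_mat d d"
  by (rule pow_carrier_mat) simp
lemma clockV_pow_carrier[simp]: "clockV d ^\<^sub>m a \<in> carrier_mat d d"
  by (rule pow_carrier_mat) simp
lemma weyl_dims[simp]: "dim_row (weyl d a b) = d" "dim_col (weyl d a b) = d"
  by (simp_all add: weyl_def)
lemma weyl_carrier[simp]: "weyl d a b \<in> carrier_mat d d"
  unfolding weyl_def by (rule mult_carrier_mat[of _ d d]) simp_all

lemma shiftU_pow_entry: "0 < d \<Longrightarrow> i < d \<Longrightarrow> j < d \<Longrightarrow>
   (shiftU d ^\<^sub>m a) $$ (i,j) = (if i = md d (int j + int a) then 1 else 0)"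
proof (induct a arbitrary: i j)
  case 0
  then show ?case by simp
next
  case (Suc a)
  have "(shiftU d ^\<^sub>m Suc a) $$ (i,j) = (shiftU d ^\<^sub>m a * shiftU d) $$ (i,j)" by simp
  also have "\<dots> = (\<Sum>k<d. (shiftU d ^\<^sub>m a) $$ (i,k) * shiftU d $$ (k,j))"
    by (rule mult_entry[of _ d d]) (use Suc in simp_all)
  also have "\<dots> = (\<Sum>k<d. (shiftU d ^\<^sub>m a) $$ (i,k) * (if k = (j + 1) mod d then 1 else 0))"
    using Suc by (intro sum.cong) (auto simp: shiftU_def)
  also have "\<dots> = (shiftU d ^\<^sub>m a) $$ (i, (j+1) mod d)"
    using Suc by (intro sum_pick_r) auto
  also have "\<dots> = (if i = md d (int ((j+1) mod d) + int a) then 1 else 0)"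
    using Suc by simp
  also have "md d (int ((j+1) mod d) + int a) = md d (int j + int (Suc a))"
    using Suc(2) by (simp add: md_eq_iff zmod_int mod_simps algebra_simps)
  finally show ?case .
qed

lemma clockV_pow_entry: "0 < d \<Longrightarrow> i < d \<Longrightarrow> j < d \<Longrightarrow>
   (clockV d ^\<^sub>m b) $$ (i,j) = (if i = j then om d (int j * int b) else 0)"
proof (induct b arbitrary: i j)
  case 0
  then show ?case by simp
next
  case (Suc b)
  have "(clockV d ^\<^sub>m Suc b) $$ (i,j) = (clockV d ^\<^sub>m b * clockV d) $$ (i,j)" by simp
  also have "\<dots> = (\<Sum>k<d. (clockV d ^\<^sub>m b) $$ (i,k) * clockV d $$ (k,j))"
    by (rule mult_entry[of _ d d]) (use Suc in simp_all)
  also have "\<dots> = (\<Sum>k<d. ((clockV d ^\<^sub>m b) $$ (i,j) * om d (int j)) * (if k = j then 1 else 0))"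
    using Suc by (intro sum.cong) (auto simp: clockV_def xi_pow)
  also have "\<dots> = (clockV d ^\<^sub>m b) $$ (i,j) * om d (int j)"
    using Suc by (intro sum_pick_r) auto
  also have "\<dots> = (if i = j then om d (int j * int (Suc b)) else 0)"
    using Suc by (simp add: om_add[symmetric] algebra_simps)
  finally show ?case .
qed

lemma weyl_entry: "0 < d \<Longrightarrow> i < d \<Longrightarrow> j < d \<Longrightarrow>
   weyl d a b $$ (i,j) = (if i = md d (int j + int a) then om d (int j * int b) else 0)"
proof -
  assume d: "0 < d" and i: "i < d" and j: "j < d"
  have "weyl d a b $$ (i,j) = (\<Sum>k<d. (shiftU d ^\<^sub>m a) $$ (i,k) * (clockV d ^\<^sub>m b) $$ (k,j))"
    unfolding weyl_def using i j by (intro mult_entry[of _ d d]) simp_all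
  also have "\<dots> = (\<Sum>k<d. ((shiftU d ^\<^sub>m a) $$ (i,j) * om d (int j * int b)) * (if k = j then 1 else 0))"
    using d i j by (intro sum.cong) (auto simp: clockV_pow_entry)
  also have "\<dots> = (shiftU d ^\<^sub>m a) $$ (i,j) * om d (int j * int b)"
    using j by (intro sum_pick_r) auto
  finally show ?thesis using d i j by (simp add: shiftU_pow_entry)
qed

definition Tw :: "nat \<Rightarrow> int \<Rightarrow> int \<Rightarrow> complex mat \<Rightarrow> complex mat" where
  "Tw d a b X = mat d d (\<lambda>(r,s). om d (b * (int r - int s)) * X $$ (md d (int r - a), md d (int s - a)))"

lemma Tw_carrier[simp]: "Tw d a b X \<in> carrier_mat d d"
  by (simp add: Tw_def)
lemma Tw_dims[simp]: "dim_row (Tw d a b X) = d" "dim_col (Tw d a b X) = d"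
  by (simp_all add: Tw_def)
lemma Tw_entry: "r < d \<Longrightarrow> s < d \<Longrightarrow>
  Tw d a b X $$ (r,s) = om d (b * (int r - int s)) * X $$ (md d (int r - a), md d (int s - a))"
  by (simp add: Tw_def)

lemma phase_md: "0 < d \<Longrightarrow> om d (int (md d x) * b) * cnj (om d (int (md d y) * b)) = om d (b * (x - y))"
proof -
  assume d: "0 < d"
  have "(x mod int d * b - y mod int d * b) mod int d = (x * b - y * b) mod int d"
    by (metis mod_diff_eq mod_mult_left_eq)
  hence "om d (x mod int d * b - y mod int d * b) = om d (b * (x - y))"
    using d by (intro om_cong) (simp_all add: algebra_simps)
  thus ?thesis using d by (simp add: int_md om_cnj om_add[symmetric])
qed

lemma weyl_conj: "0 < d \<Longrightarrow> X \<in> carrier_mat d d \<Longrightarrow>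
   weyl d a b * X * mat_adjoint (weyl d a b) = Tw d (int a) (int b) X"
proof (rule eq_matI)
  assume d: "0 < d" and X: "X \<in> carrier_mat d d"
  let ?W = "weyl d a b"
  have WX: "?W * X \<in> carrier_mat d d" using X by (intro mult_carrier_mat[of _ d d]) auto
  have Wa: "mat_adjoint ?W \<in> carrier_mat d d" by (simp add: mat_adjoint_eq[of _ d d])
  fix r s assume r: "r < dim_row (Tw d (int a) (int b) X)" and s: "s < dim_col (Tw d (int a) (int b) X)"
  hence r: "r < d" and s: "s < d" by auto
  let ?i0 = "md d (int r - int a)" and ?j0 = "md d (int s - int a)"
  have 1: "(?W * X) $$ (r,j) = om d (int ?i0 * int b) * X $$ (?i0, j)" if j: "j < d" for j
  proof -
    have "(?W * X) $$ (r,j) = (\<Sum>i<d. ?W $$ (r,i) * X $$ (i,j))"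
      using X r j by (intro mult_entry[of _ d d]) auto
    also have "\<dots> = (\<Sum>i<d. if r = md d (int i + int a) then om d (int i * int b) * X $$ (i,j) else 0)"
      using d r by (intro sum.cong) (auto simp: weyl_entry)
    also have "\<dots> = om d (int ?i0 * int b) * X $$ (?i0, j)"
      using d r by (intro sum_pick_gen) (auto simp: md_shift_iff)
    finally show ?thesis .
  qed
  have "(?W * X * mat_adjoint ?W) $$ (r,s) = (\<Sum>j<d. (?W * X) $$ (r,j) * mat_adjoint ?W $$ (j,s))"
    using WX Wa r s by (intro mult_entry[of _ d d]) auto
  also have "\<dots> = (\<Sum>j<d. if s = md d (int j + int a) then
         om d (int ?i0 * int b) * X $$ (?i0, j) * cnj (om d (int j * int b)) else 0)"
    using d s by (intro sum.cong) (auto simp: 1 mat_adjoint_eq[of _ d d] weyl_entry)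
  also have "\<dots> = om d (int ?i0 * int b) * X $$ (?i0, ?j0) * cnj (om d (int ?j0 * int b))"
    using d s by (intro sum_pick_gen) (auto simp: md_shift_iff)
  also have "\<dots> = om d (int b * (int r - int s)) * X $$ (?i0, ?j0)"
    using phase_md[OF d, of "int r - int a" "int b" "int s - int a"] by (simp add: algebra_simps)
  finally show "(?W * X * mat_adjoint ?W) $$ (r,s) = Tw d (int a) (int b) X $$ (r,s)"
    using r s by (simp add: Tw_entry)
next
  show "dim_row (weyl d a b * X * mat_adjoint (weyl d a b)) = dim_row (Tw d (int a) (int b) X)" by simp
  show "dim_col (weyl d a b * X * mat_adjoint (weyl d a b)) = dim_col (Tw d (int a) (int b) X)"
    by (simp add: mat_adjoint_eq[of _ d d])
qed

lemma Ad_weyl: "0 < d \<Longrightarrow> X \<in> carrier_mat d d \<Longrightarrow>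
   Ad (weyl d a b) X = Tw d (- int a) (- int b) X"
proof (rule eq_matI)
  assume d: "0 < d" and X: "X \<in> carrier_mat d d"
  let ?W = "weyl d a b"
  have Wa: "mat_adjoint ?W \<in> carrier_mat d d" by (simp add: mat_adjoint_eq[of _ d d])
  have WX: "mat_adjoint ?W * X \<in> carrier_mat d d" using X Wa by (intro mult_carrier_mat[of _ d d]) auto
  fix r s assume r: "r < dim_row (Tw d (- int a) (- int b) X)" and s: "s < dim_col (Tw d (- int a) (- int b) X)"
  hence r: "r < d" and s: "s < d" by auto
  let ?i0 = "md d (int r + int a)" and ?j0 = "md d (int s + int a)"
  have 1: "(mat_adjoint ?W * X) $$ (r,j) = cnj (om d (int r * int b)) * X $$ (?i0, j)" if j: "j < d" for j
  proof -
    have "(mat_adjoint ?W * X) $$ (r,j) = (\<Sum>i<d. mat_adjoint ?W $$ (r,i) * X $$ (i,j))"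
      using X Wa r j by (intro mult_entry[of _ d d]) auto
    also have "\<dots> = (\<Sum>i<d. if i = ?i0 then cnj (om d (int r * int b)) * X $$ (i,j) else 0)"
      using d r by (intro sum.cong) (auto simp: weyl_entry mat_adjoint_eq[of _ d d])
    also have "\<dots> = cnj (om d (int r * int b)) * X $$ (?i0, j)"
      using d r by (intro sum_pick_gen) auto
    finally show ?thesis .
  qed
  have "(mat_adjoint ?W * X * ?W) $$ (r,s) = (\<Sum>j<d. (mat_adjoint ?W * X) $$ (r,j) * ?W $$ (j,s))"
    using WX r s by (intro mult_entry[of _ d d]) auto
  also have "\<dots> = (\<Sum>j<d. if j = ?j0 then
         cnj (om d (int r * int b)) * X $$ (?i0, j) * om d (int s * int b) else 0)"
    using d s by (intro sum.cong) (auto simp: 1 weyl_entry)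
  also have "\<dots> = cnj (om d (int r * int b)) * X $$ (?i0, ?j0) * om d (int s * int b)"
    using d s by (intro sum_pick_gen) auto
  also have "\<dots> = om d (- int b * (int r - int s)) * X $$ (?i0, ?j0)"
    by (simp add: om_cnj om_add[symmetric] algebra_simps)
  finally show "(Ad ?W X) $$ (r,s) = Tw d (- int a) (- int b) X $$ (r,s)"
    using r s by (simp add: Tw_entry Ad_def)
qed (auto simp: Ad_def)

lemma md_md: "0 < d \<Longrightarrow> md d (int (md d x) - c) = md d (x - c)"
  by (simp add: md_eq_iff int_md mod_diff_left_eq)

lemma md_diff_mod: "0 < d \<Longrightarrow> (int (md d x) - int (md d y)) mod int d = (x - y) mod int d"
  by (simp add: int_md mod_diff_eq)

lemma Tw_Tw: "0 < d \<Longrightarrow> Tw d a b (Tw d c e X) = Tw d (a + c) (b + e) X"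
proof (rule eq_matI)
  assume d: "0 < d"
  fix r s assume "r < dim_row (Tw d (a + c) (b + e) X)" "s < dim_col (Tw d (a + c) (b + e) X)"
  hence r: "r < d" and s: "s < d" by auto
  have h: "(int (md d (int r - a)) - int (md d (int s - a))) mod int d = (int r - int s) mod int d"
    using md_diff_mod[OF d, of "int r - a" "int s - a"] by simp
  have "om d (e * (int (md d (int r - a)) - int (md d (int s - a)))) = om d (e * (int r - int s))"
  proof (rule om_cong[OF d])
    have "e * (int (md d (int r - a)) - int (md d (int s - a))) mod int d
       = e * ((int (md d (int r - a)) - int (md d (int s - a))) mod int d) mod int d"
      by (simp add: mod_mult_right_eq)
    also have "\<dots> = e * ((int r - int s) mod int d) mod int d" by (simp only: h)
    also have "\<dots> = e * (int r - int s) mod int d" by (simp add: mod_mult_right_eq)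
    finally show "e * (int (md d (int r - a)) - int (md d (int s - a))) mod int d = e * (int r - int s) mod int d" .
  qed
  moreover have "md d (int (md d (int r - a)) - c) = md d (int r - (a + c))"
    "md d (int (md d (int s - a)) - c) = md d (int s - (a + c))"
    using d by (simp_all add: md_md algebra_simps)
  ultimately show "Tw d a b (Tw d c e X) $$ (r, s) = Tw d (a + c) (b + e) X $$ (r, s)"
    using d r s by (simp add: Tw_entry om_add[symmetric] algebra_simps)
qed auto

lemma Tw_comm: "0 < d \<Longrightarrow> Tw d a b (Tw d c e X) = Tw d c e (Tw d a b X)"
  by (simp add: Tw_Tw add.commute)

lemma Tw_00: "X \<in> carrier_mat d d \<Longrightarrow> Tw d 0 0 X = X"
  by (rule eq_matI) (auto simp: Tw_entry)

lemma mod_shift_cancel: "((x::int) - a) mod n = (y - a) mod n \<longleftrightarrow> x mod n = y mod n"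
proof
  assume "(x - a) mod n = (y - a) mod n"
  hence "((x - a) mod n + a) mod n = ((y - a) mod n + a) mod n" by simp
  thus "x mod n = y mod n" by (simp add: mod_add_left_eq)
next
  assume "x mod n = y mod n"
  hence "(x mod n - a) mod n = (y mod n - a) mod n" by simp
  thus "(x - a) mod n = (y - a) mod n" by (simp add: mod_diff_left_eq)
qed

lemma Tw_one: "0 < d \<Longrightarrow> Tw d a b (1\<^sub>m d) = 1\<^sub>m d"
proof (rule eq_matI)
  assume d: "0 < d"
  fix r s assume "r < dim_row (1\<^sub>m d)" "s < dim_col (1\<^sub>m d)"
  hence r: "r < d" and s: "s < d" by auto
  have "md d (int r - a) = md d (int s - a) \<longleftrightarrow> int r mod int d = int s mod int d"
    using d by (simp add: md_eq_iff mod_shift_cancel)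
  also have "\<dots> \<longleftrightarrow> r = s" using r s by simp
  finally have "md d (int r - a) = md d (int s - a) \<longleftrightarrow> r = s" .
  thus "Tw d a b (1\<^sub>m d) $$ (r,s) = 1\<^sub>m d $$ (r,s)"
    using d r s by (simp add: Tw_entry)
qed auto

lemma Tw_add: "X \<in> carrier_mat d d \<Longrightarrow> Y \<in> carrier_mat d d \<Longrightarrow> 0 < d \<Longrightarrow> Tw d a b (X + Y) = Tw d a b X + Tw d a b Y"
  by (rule eq_matI) (auto simp: Tw_entry algebra_simps)

lemma Tw_smult: "X \<in> carrier_mat d d \<Longrightarrow> 0 < d \<Longrightarrow> Tw d a b (k \<cdot>\<^sub>m X) = k \<cdot>\<^sub>m Tw d a b X"
  by (rule eq_matI) (auto simp: Tw_entry algebra_simps)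

lemma Tw_mod: "0 < d \<Longrightarrow> Tw d a b X = Tw d (int (md d a)) (int (md d b)) X"
proof (rule eq_matI)
  assume d: "0 < d"
  fix r s assume "r < dim_row (Tw d (int (md d a)) (int (md d b)) X)" "s < dim_col (Tw d (int (md d a)) (int (md d b)) X)"
  hence r: "r < d" and s: "s < d" by auto
  have "om d (b * (int r - int s)) = om d (int (md d b) * (int r - int s))"
  proof (rule om_cong[OF d])
    have "int (md d b) * (int r - int s) mod int d = (b mod int d) * (int r - int s) mod int d"
      using d by (simp add: int_md)
    also have "\<dots> = b * (int r - int s) mod int d" by (simp add: mod_mult_left_eq)
    finally show "b * (int r - int s) mod int d = int (md d b) * (int r - int s) mod int d" by simp
  qed
  moreover have "md d (int r - a) = md d (int r - int (md d a))" "md d (int s - a) = md d (int s - int (md d a))"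
    using d by (simp_all add: md_eq_iff int_md mod_diff_right_eq)
  ultimately show "Tw d a b X $$ (r,s) = Tw d (int (md d a)) (int (md d b)) X $$ (r,s)"
    using r s by (simp add: Tw_entry)
qed auto


definition Em :: "nat \<Rightarrow> nat \<Rightarrow> nat \<Rightarrow> complex mat" where
  "Em d p q = mat d d (\<lambda>(i,j). if i = p \<and> j = q then 1 else 0)"

lemma Em_carrier[simp]: "Em d p q \<in> carrier_mat d d"
  by (simp add: Em_def)

lemma lin_zero: "linear_on_Md d \<Psi> \<Longrightarrow> i < d \<Longrightarrow> j < d \<Longrightarrow> \<Psi> (0\<^sub>m d d) $$ (i,j) = 0"
proof -
  assume L: "linear_on_Md d \<Psi>" and i: "i < d" and j: "j < d"
  have "\<Psi> (0\<^sub>m d d) = \<Psi> (0 \<cdot>\<^sub>m 0\<^sub>m d d)" by simp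
  also have "\<dots> = 0 \<cdot>\<^sub>m \<Psi> (0\<^sub>m d d)" using L unfolding linear_on_Md_def by (meson zero_carrier_mat)
  finally have "\<Psi> (0\<^sub>m d d) = 0 \<cdot>\<^sub>m \<Psi> (0\<^sub>m d d)" .
  moreover have "\<Psi> (0\<^sub>m d d) \<in> carrier_mat d d" using L unfolding linear_on_Md_def by auto
  ultimately show ?thesis using i j by (metis carrier_matD index_smult_mat(1) mult_zero_left)
qed

lemma lin_expand_set:
  assumes L: "linear_on_Md d \<Psi>" and X: "X \<in> carrier_mat d d" and i: "i < d" and j: "j < d"
    and S: "finite S" "S \<subseteq> {..<d} \<times> {..<d}"
  shows "\<Psi> (mat d d (\<lambda>(r,s). if (r,s) \<in> S then X $$ (r,s) else 0)) $$ (i,j)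
        = (\<Sum>(k,l)\<in>S. X $$ (k,l) * \<Psi> (Em d k l) $$ (i,j))"
  using S
proof (induct S rule: finite_induct)
  case empty
  have eq0: "mat d d (\<lambda>(r,s). if (r,s) \<in> {} then X $$ (r,s) else 0) = 0\<^sub>m d d"
    by (rule eq_matI) auto
  show ?case by (subst eq0) (simp add: lin_zero[OF L i j])
next
  case (insert x F)
  obtain k l where x: "x = (k,l)" by force
  have kl: "k < d" "l < d" using insert x by auto
  let ?P = "\<lambda>S. mat d d (\<lambda>(r,s). if (r,s) \<in> S then X $$ (r,s) else 0)"
  have eq: "?P (insert x F) = ?P F + X $$ (k,l) \<cdot>\<^sub>m Em d k l"
    using insert(2) x by (intro eq_matI) (auto simp: Em_def)
  have c1: "?P F \<in> carrier_mat d d" and c2: "X $$ (k,l) \<cdot>\<^sub>m Em d k l \<in> carrier_mat d d" by auto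
  have "\<Psi> (?P (insert x F)) = \<Psi> (?P F) + \<Psi> (X $$ (k,l) \<cdot>\<^sub>m Em d k l)"
    using L c1 c2 unfolding eq linear_on_Md_def by blast
  also have "\<Psi> (X $$ (k,l) \<cdot>\<^sub>m Em d k l) = X $$ (k,l) \<cdot>\<^sub>m \<Psi> (Em d k l)"
    using L unfolding linear_on_Md_def by auto
  finally have eq2: "\<Psi> (?P (insert x F)) = \<Psi> (?P F) + X $$ (k,l) \<cdot>\<^sub>m \<Psi> (Em d k l)" .
  have cP: "\<Psi> (?P F) \<in> carrier_mat d d" and cE: "\<Psi> (Em d k l) \<in> carrier_mat d d"
    using L c1 unfolding linear_on_Md_def by auto
  have A: "\<Psi> (?P (insert x F)) $$ (i,j) = \<Psi> (?P F) $$ (i,j) + X $$ (k,l) * \<Psi> (Em d k l) $$ (i,j)"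
    unfolding eq2 using cP cE i j by simp
  have B: "\<Psi> (?P F) $$ (i,j) = (\<Sum>(k,l)\<in>F. X $$ (k,l) * \<Psi> (Em d k l) $$ (i,j))"
    using insert.prems by (intro insert.hyps(3)) auto
  have C: "(\<Sum>(k,l)\<in>insert x F. X $$ (k,l) * \<Psi> (Em d k l) $$ (i,j)) =
     X $$ (k,l) * \<Psi> (Em d k l) $$ (i,j) + (\<Sum>(k,l)\<in>F. X $$ (k,l) * \<Psi> (Em d k l) $$ (i,j))"
    using insert(1,2) x by (simp add: sum.insert)
  show ?case unfolding A B C by (simp add: add.commute)
qed

lemma lin_expand:
  assumes L: "linear_on_Md d \<Psi>" and X: "X \<in> carrier_mat d d" and i: "i < d" and j: "j < d"
  shows "\<Psi> X $$ (i,j) = (\<Sum>k<d. \<Sum>l<d. X $$ (k,l) * \<Psi> (Em d k l) $$ (i,j))"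
proof -
  have "mat d d (\<lambda>(r,s). if (r,s) \<in> {..<d} \<times> {..<d} then X $$ (r,s) else 0) = X"
    using X by (intro eq_matI) auto
  hence "\<Psi> X $$ (i,j) = (\<Sum>(k,l)\<in>{..<d} \<times> {..<d}. X $$ (k,l) * \<Psi> (Em d k l) $$ (i,j))"
    using lin_expand_set[OF L X i j, of "{..<d} \<times> {..<d}"] by simp
  also have "\<dots> = (\<Sum>k<d. \<Sum>l<d. X $$ (k,l) * \<Psi> (Em d k l) $$ (i,j))"
    by (simp add: sum.cartesian_product)
  finally show ?thesis .
qed

lemma lin_comp: "linear_on_Md d A \<Longrightarrow> linear_on_Md d B \<Longrightarrow> linear_on_Md d (\<lambda>X. A (B X))"
  unfolding linear_on_Md_def by auto



lemma hvd_iff: "((f :: real \<Rightarrow> complex) has_vector_derivative D) (at x within S) \<longleftrightarrow>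
   ((\<lambda>y. (f y - f x) / of_real (y - x)) \<longlongrightarrow> D) (at x within S)"
  unfolding has_vector_derivative_complex_iff has_field_derivative_iff tendsto_complex_iff
  by (simp add: Re_divide_of_real Im_divide_of_real)

lemma lim_unique_right: "(f \<longlongrightarrow> a) (at_right (0::real)) \<Longrightarrow> (g \<longlongrightarrow> b) (at_right 0) \<Longrightarrow>
   eventually (\<lambda>h. f h = g h) (at_right 0) \<Longrightarrow> a = (b :: complex)"
  by (metis tendsto_cong tendsto_unique trivial_limit_at_right_real)

definition cov :: "nat \<Rightarrow> (complex mat \<Rightarrow> complex mat) \<Rightarrow> bool" where
  "cov d \<Psi> \<longleftrightarrow> (\<forall>a b. \<forall>X \<in> carrier_mat d d. \<Psi> (Tw d a b X) = Tw d a b (\<Psi> X))"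

lemma double_pick: "i < (d::nat) \<Longrightarrow> j < d \<Longrightarrow>
  (\<Sum>k<d. \<Sum>l<d. f k l * (if k = i \<and> l = j then 1 else 0)) = (f i j :: 'a::semiring_1)"
proof -
  assume i: "i < d" and j: "j < d"
  have "(\<Sum>l<d. f k l * (if k = i \<and> l = j then 1 else 0)) = (if k = i then f k j else 0)" for k
  proof (cases "k = i")
    case True
    then show ?thesis using sum_pick_r[OF j, of "f k"] by simp
  qed simp
  hence "(\<Sum>k<d. \<Sum>l<d. f k l * (if k = i \<and> l = j then 1 else 0)) = (\<Sum>k<d. if k = i then f k j else 0)"
    by simp
  also have "\<dots> = f i j" using i by simp
  finally show ?thesis .
qed

locale sg =
  fixes d :: nat and \<Phi> :: "real \<Rightarrow> complex mat \<Rightarrow> complex mat" and L :: "complex mat \<Rightarrow> complex mat"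
  assumes dpos: "0 < d" and qds: "qds_unital d \<Phi>" and gen: "generator d \<Phi> L"
begin

lemma Phi_lin: "0 \<le> t \<Longrightarrow> linear_on_Md d (\<Phi> t)"
  using qds unfolding qds_unital_def unital_channel_def by blast
lemma Phi_carrier: "0 \<le> t \<Longrightarrow> X \<in> carrier_mat d d \<Longrightarrow> \<Phi> t X \<in> carrier_mat d d"
  using Phi_lin unfolding linear_on_Md_def by blast
lemma Phi0: "X \<in> carrier_mat d d \<Longrightarrow> \<Phi> 0 X = X"
  using qds unfolding qds_unital_def by blast
lemma Phi_semi: "0 \<le> s \<Longrightarrow> 0 \<le> t \<Longrightarrow> X \<in> carrier_mat d d \<Longrightarrow> \<Phi> s (\<Phi> t X) = \<Phi> (s + t) X"
  using qds unfolding qds_unital_def by blast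
lemma Phi_cont: "X \<in> carrier_mat d d \<Longrightarrow> i < d \<Longrightarrow> j < d \<Longrightarrow> continuous_on {0..} (\<lambda>t. \<Phi> t X $$ (i,j))"
  using qds unfolding qds_unital_def by blast
lemma Phi_unit: "0 \<le> t \<Longrightarrow> \<Phi> t (1\<^sub>m d) = 1\<^sub>m d"
  using qds unfolding qds_unital_def unital_channel_def by blast
lemma Phi_CP: "0 \<le> t \<Longrightarrow> completely_positive d (\<Phi> t)"
  using qds unfolding qds_unital_def unital_channel_def by blast
lemma L_carrier: "X \<in> carrier_mat d d \<Longrightarrow> L X \<in> carrier_mat d d"
  using gen unfolding generator_def by blast

lemma quot: "X \<in> carrier_mat d d \<Longrightarrow> i < d \<Longrightarrow> j < d \<Longrightarrow>
  ((\<lambda>h. (\<Phi> h X $$ (i,j) - X $$ (i,j)) / of_real h) \<longlongrightarrow> L X $$ (i,j)) (at_right 0)"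
proof -
  assume X: "X \<in> carrier_mat d d" and i: "i < d" and j: "j < d"
  have "((\<lambda>t. \<Phi> t X $$ (i,j)) has_vector_derivative L X $$ (i,j)) (at_right 0)"
    using gen X i j unfolding generator_def by blast
  hence "((\<lambda>h. (\<Phi> h X $$ (i,j) - \<Phi> 0 X $$ (i,j)) / of_real (h - 0)) \<longlongrightarrow> L X $$ (i,j)) (at_right 0)"
    by (simp only: hvd_iff)
  thus ?thesis using Phi0[OF X] by simp
qed

lemma ev_pos: "eventually (\<lambda>h. 0 < h) (at_right (0::real))"
  by (rule eventually_at_right_less)

lemma L_lin: "linear_on_Md d L"
  unfolding linear_on_Md_def
proof (intro conjI ballI allI)
  fix X :: "complex mat" assume "X \<in> carrier_mat d d" thus "L X \<in> carrier_mat d d" by (rule L_carrier)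
next
  fix X Y :: "complex mat" assume X: "X \<in> carrier_mat d d" and Y: "Y \<in> carrier_mat d d"
  show "L (X + Y) = L X + L Y"
  proof (rule eq_matI)
    fix i j assume "i < dim_row (L X + L Y)" "j < dim_col (L X + L Y)"
    hence i: "i < d" and j: "j < d" using L_carrier[OF X] L_carrier[OF Y] by auto
    have XY: "X + Y \<in> carrier_mat d d" using X Y by simp
    have lim2: "((\<lambda>h. (\<Phi> h X $$ (i,j) - X $$ (i,j)) / of_real h + (\<Phi> h Y $$ (i,j) - Y $$ (i,j)) / of_real h)
        \<longlongrightarrow> L X $$ (i,j) + L Y $$ (i,j)) (at_right 0)"
      by (intro tendsto_add quot X Y i j)
    have "L (X + Y) $$ (i,j) = L X $$ (i,j) + L Y $$ (i,j)"
    proof (rule lim_unique_right[OF quot[OF XY i j] lim2])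
      show "\<forall>\<^sub>F h in at_right 0. (\<Phi> h (X + Y) $$ (i, j) - (X + Y) $$ (i, j)) / complex_of_real h =
        (\<Phi> h X $$ (i,j) - X $$ (i,j)) / of_real h + (\<Phi> h Y $$ (i,j) - Y $$ (i,j)) / of_real h"
        using ev_pos
      proof (rule eventually_mono)
        fix h :: real assume h: "0 < h"
        have "\<Phi> h (X + Y) = \<Phi> h X + \<Phi> h Y" using Phi_lin[of h] h X Y unfolding linear_on_Md_def by auto
        moreover have "\<Phi> h X \<in> carrier_mat d d" "\<Phi> h Y \<in> carrier_mat d d" using Phi_carrier h X Y by auto
        ultimately show "(\<Phi> h (X + Y) $$ (i, j) - (X + Y) $$ (i, j)) / complex_of_real h =
          (\<Phi> h X $$ (i,j) - X $$ (i,j)) / of_real h + (\<Phi> h Y $$ (i,j) - Y $$ (i,j)) / of_real h"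
          using X Y i j by (simp add: diff_divide_distrib add_divide_distrib)
      qed
    qed
    thus "L (X + Y) $$ (i,j) = (L X + L Y) $$ (i,j)" using L_carrier[OF X] L_carrier[OF Y] i j by simp
  next
    show "dim_row (L (X + Y)) = dim_row (L X + L Y)" "dim_col (L (X + Y)) = dim_col (L X + L Y)"
      using L_carrier[OF X] L_carrier[OF Y] L_carrier[of "X + Y"] X Y by auto
  qed
next
  fix c :: complex and X :: "complex mat" assume X: "X \<in> carrier_mat d d"
  show "L (c \<cdot>\<^sub>m X) = c \<cdot>\<^sub>m L X"
  proof (rule eq_matI)
    fix i j assume "i < dim_row (c \<cdot>\<^sub>m L X)" "j < dim_col (c \<cdot>\<^sub>m L X)"
    hence i: "i < d" and j: "j < d" using L_carrier[OF X] by auto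
    have cX: "c \<cdot>\<^sub>m X \<in> carrier_mat d d" using X by simp
    have lim2: "((\<lambda>h. c * ((\<Phi> h X $$ (i,j) - X $$ (i,j)) / of_real h)) \<longlongrightarrow> c * L X $$ (i,j)) (at_right 0)"
      by (intro tendsto_mult_left quot X i j)
    have "L (c \<cdot>\<^sub>m X) $$ (i,j) = c * L X $$ (i,j)"
    proof (rule lim_unique_right[OF quot[OF cX i j] lim2])
      show "\<forall>\<^sub>F h in at_right 0. (\<Phi> h (c \<cdot>\<^sub>m X) $$ (i, j) - (c \<cdot>\<^sub>m X) $$ (i, j)) / complex_of_real h =
        c * ((\<Phi> h X $$ (i,j) - X $$ (i,j)) / of_real h)"
        using ev_pos
      proof (rule eventually_mono)
        fix h :: real assume h: "0 < h"
        have "\<Phi> h (c \<cdot>\<^sub>m X) = c \<cdot>\<^sub>m \<Phi> h X" using Phi_lin[of h] h X unfolding linear_on_Md_def by auto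
        moreover have "\<Phi> h X \<in> carrier_mat d d" using Phi_carrier h X by auto
        ultimately show "(\<Phi> h (c \<cdot>\<^sub>m X) $$ (i, j) - (c \<cdot>\<^sub>m X) $$ (i, j)) / complex_of_real h =
          c * ((\<Phi> h X $$ (i,j) - X $$ (i,j)) / of_real h)"
          using X i j by (simp add: algebra_simps diff_divide_distrib)
      qed
    qed
    thus "L (c \<cdot>\<^sub>m X) $$ (i,j) = (c \<cdot>\<^sub>m L X) $$ (i,j)" using L_carrier[OF X] i j by simp
  next
    show "dim_row (L (c \<cdot>\<^sub>m X)) = dim_row (c \<cdot>\<^sub>m L X)" "dim_col (L (c \<cdot>\<^sub>m X)) = dim_col (c \<cdot>\<^sub>m L X)"
      using L_carrier[OF X] L_carrier[of "c \<cdot>\<^sub>m X"] X by auto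
  qed
qed

lemma L_one: "L (1\<^sub>m d) = 0\<^sub>m d d"
proof (rule eq_matI)
  fix i j assume "i < dim_row (0\<^sub>m d d :: complex mat)" "j < dim_col (0\<^sub>m d d :: complex mat)"
  hence i: "i < d" and j: "j < d" by auto
  have "L (1\<^sub>m d) $$ (i,j) = 0"
  proof (rule lim_unique_right[OF quot[OF one_carrier_mat i j] tendsto_const])
    show "\<forall>\<^sub>F h in at_right 0. (\<Phi> h (1\<^sub>m d) $$ (i, j) - 1\<^sub>m d $$ (i, j)) / complex_of_real h = 0"
      using ev_pos by (rule eventually_mono) (simp add: Phi_unit)
  qed
  thus "L (1\<^sub>m d) $$ (i,j) = 0\<^sub>m d d $$ (i,j)" using i j by simp
next
  show "dim_row (L (1\<^sub>m d)) = dim_row (0\<^sub>m d d :: complex mat)" "dim_col (L (1\<^sub>m d)) = dim_col (0\<^sub>m d d :: complex mat)"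
    using L_carrier[OF one_carrier_mat] by auto
qed


lemma Em_expand_Phi: "0 \<le> u \<Longrightarrow> Y \<in> carrier_mat d d \<Longrightarrow> i < d \<Longrightarrow> j < d \<Longrightarrow>
  \<Phi> u Y $$ (i,j) = (\<Sum>k<d. \<Sum>l<d. Y $$ (k,l) * \<Phi> u (Em d k l) $$ (i,j))"
  by (rule lin_expand[OF Phi_lin])

lemma quot_sum: "0 \<le> u \<Longrightarrow> Y \<in> carrier_mat d d \<Longrightarrow> i < d \<Longrightarrow> j < d \<Longrightarrow> 0 < h \<Longrightarrow>
  (\<Phi> u (\<Phi> h Y) $$ (i,j) - \<Phi> u Y $$ (i,j)) / of_real h =
  (\<Sum>k<d. \<Sum>l<d. ((\<Phi> h Y $$ (k,l) - Y $$ (k,l)) / of_real h) * \<Phi> u (Em d k l) $$ (i,j))"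
proof -
  assume u: "0 \<le> u" and Y: "Y \<in> carrier_mat d d" and i: "i < d" and j: "j < d" and h: "0 < h"
  have hY: "\<Phi> h Y \<in> carrier_mat d d" using Phi_carrier h Y by simp
  show ?thesis
    unfolding Em_expand_Phi[OF u hY i j] Em_expand_Phi[OF u Y i j]
    by (simp add: sum_divide_distrib diff_divide_distrib sum_subtractf left_diff_distrib)
qed

lemma right_deriv: "0 \<le> u \<Longrightarrow> Y \<in> carrier_mat d d \<Longrightarrow> i < d \<Longrightarrow> j < d \<Longrightarrow>
  ((\<lambda>h. (\<Phi> (u + h) Y $$ (i,j) - \<Phi> u Y $$ (i,j)) / of_real h) \<longlongrightarrow> \<Phi> u (L Y) $$ (i,j)) (at_right 0)"
proof -
  assume u: "0 \<le> u" and Y: "Y \<in> carrier_mat d d" and i: "i < d" and j: "j < d"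
  have lim: "((\<lambda>h. \<Sum>k<d. \<Sum>l<d. ((\<Phi> h Y $$ (k,l) - Y $$ (k,l)) / of_real h) * \<Phi> u (Em d k l) $$ (i,j))
     \<longlongrightarrow> (\<Sum>k<d. \<Sum>l<d. L Y $$ (k,l) * \<Phi> u (Em d k l) $$ (i,j))) (at_right 0)"
    using Y by (intro tendsto_sum tendsto_mult_right quot) auto
  have eq: "(\<Sum>k<d. \<Sum>l<d. L Y $$ (k,l) * \<Phi> u (Em d k l) $$ (i,j)) = \<Phi> u (L Y) $$ (i,j)"
    using Em_expand_Phi[OF u L_carrier[OF Y] i j] by simp
  show ?thesis
  proof (rule Lim_transform_eventually[OF lim[unfolded eq]])
    show "\<forall>\<^sub>F h in at_right 0. (\<Sum>k<d. \<Sum>l<d. ((\<Phi> h Y $$ (k,l) - Y $$ (k,l)) / of_real h) * \<Phi> u (Em d k l) $$ (i,j))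
       = (\<Phi> (u + h) Y $$ (i,j) - \<Phi> u Y $$ (i,j)) / of_real h"
      using ev_pos
    proof (rule eventually_mono)
      fix h :: real assume h: "0 < h"
      show "(\<Sum>k<d. \<Sum>l<d. ((\<Phi> h Y $$ (k,l) - Y $$ (k,l)) / of_real h) * \<Phi> u (Em d k l) $$ (i,j))
       = (\<Phi> (u + h) Y $$ (i,j) - \<Phi> u Y $$ (i,j)) / of_real h"
        using quot_sum[OF u Y i j h] Phi_semi[OF u _ Y, of h] h by simp
    qed
  qed
qed

lemma comm: "0 \<le> u \<Longrightarrow> Y \<in> carrier_mat d d \<Longrightarrow> L (\<Phi> u Y) = \<Phi> u (L Y)"
proof -
  assume u: "0 \<le> u" and Y: "Y \<in> carrier_mat d d"
  have uY: "\<Phi> u Y \<in> carrier_mat d d" using Phi_carrier u Y by simp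
  show ?thesis
  proof (rule eq_matI)
    fix i j assume "i < dim_row (\<Phi> u (L Y))" "j < dim_col (\<Phi> u (L Y))"
    hence i: "i < d" and j: "j < d" using Phi_carrier[OF u L_carrier[OF Y]] by auto
    show "L (\<Phi> u Y) $$ (i,j) = \<Phi> u (L Y) $$ (i,j)"
    proof (rule lim_unique_right[OF quot[OF uY i j] right_deriv[OF u Y i j]])
      show "\<forall>\<^sub>F h in at_right 0. (\<Phi> h (\<Phi> u Y) $$ (i, j) - \<Phi> u Y $$ (i, j)) / complex_of_real h =
         (\<Phi> (u + h) Y $$ (i,j) - \<Phi> u Y $$ (i,j)) / of_real h"
        using ev_pos by (rule eventually_mono) (simp add: Phi_semi[OF _ u Y] add.commute)
    qed
  qed (use Phi_carrier[OF u L_carrier[OF Y]] L_carrier[OF uY] in auto)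
qed

lemma left_deriv: "0 < u \<Longrightarrow> Y \<in> carrier_mat d d \<Longrightarrow> i < d \<Longrightarrow> j < d \<Longrightarrow>
  ((\<lambda>h. (\<Phi> (u - h) Y $$ (i,j) - \<Phi> u Y $$ (i,j)) / of_real (- h)) \<longlongrightarrow> \<Phi> u (L Y) $$ (i,j)) (at_right 0)"
proof -
  assume u: "0 < u" and Y: "Y \<in> carrier_mat d d" and i: "i < d" and j: "j < d"
  have cont: "((\<lambda>h. \<Phi> (u - h) (Em d k l) $$ (i,j)) \<longlongrightarrow> \<Phi> u (Em d k l) $$ (i,j)) (at_right 0)" for k l
  proof -
    have "continuous_on {0<..} (\<lambda>t. \<Phi> t (Em d k l) $$ (i,j))"
      using Phi_cont[OF Em_carrier i j] by (rule continuous_on_subset) auto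
    hence ic: "isCont (\<lambda>t. \<Phi> t (Em d k l) $$ (i,j)) u"
      using u by (simp add: continuous_on_eq_continuous_at)
    have "((\<lambda>h. u - h) \<longlongrightarrow> u - 0) (at_right (0::real))"
      by (intro tendsto_intros)
    thus ?thesis using isCont_tendsto_compose[OF ic] by simp
  qed
  have lim: "((\<lambda>h. \<Sum>k<d. \<Sum>l<d. ((\<Phi> h Y $$ (k,l) - Y $$ (k,l)) / of_real h) * \<Phi> (u - h) (Em d k l) $$ (i,j))
     \<longlongrightarrow> (\<Sum>k<d. \<Sum>l<d. L Y $$ (k,l) * \<Phi> u (Em d k l) $$ (i,j))) (at_right 0)"
    using Y by (intro tendsto_sum tendsto_mult quot cont) auto
  have eq: "(\<Sum>k<d. \<Sum>l<d. L Y $$ (k,l) * \<Phi> u (Em d k l) $$ (i,j)) = \<Phi> u (L Y) $$ (i,j)"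
    using Em_expand_Phi[OF _ L_carrier[OF Y] i j] u by simp
  have evu: "eventually (\<lambda>h. h < u) (at_right (0::real))"
    using u by (intro order_tendstoD(2)[OF tendsto_ident_at]) 
  show ?thesis
  proof (rule Lim_transform_eventually[OF lim[unfolded eq]])
    show "\<forall>\<^sub>F h in at_right 0. (\<Sum>k<d. \<Sum>l<d. ((\<Phi> h Y $$ (k,l) - Y $$ (k,l)) / of_real h) * \<Phi> (u - h) (Em d k l) $$ (i,j))
       = (\<Phi> (u - h) Y $$ (i,j) - \<Phi> u Y $$ (i,j)) / of_real (- h)"
      using eventually_conj[OF ev_pos evu]
    proof (rule eventually_mono)
      fix h :: real assume h: "0 < h \<and> h < u"
      have uh: "0 \<le> u - h" using h by simp
      have "\<Phi> (u - h) (\<Phi> h Y) = \<Phi> u Y" using Phi_semi[OF uh _ Y, of h] h by simp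
      hence q: "(\<Phi> u Y $$ (i,j) - \<Phi> (u - h) Y $$ (i,j)) / of_real h = 
          (\<Sum>k<d. \<Sum>l<d. ((\<Phi> h Y $$ (k,l) - Y $$ (k,l)) / of_real h) * \<Phi> (u - h) (Em d k l) $$ (i,j))"
        using quot_sum[OF uh Y i j, of h] h by simp
      have "(\<Phi> (u - h) Y $$ (i,j) - \<Phi> u Y $$ (i,j)) / of_real (- h) = (\<Phi> u Y $$ (i,j) - \<Phi> (u - h) Y $$ (i,j)) / of_real h"
        using h by (simp add: field_simps)
      with q show "(\<Sum>k<d. \<Sum>l<d. ((\<Phi> h Y $$ (k,l) - Y $$ (k,l)) / of_real h) * \<Phi> (u - h) (Em d k l) $$ (i,j))
       = (\<Phi> (u - h) Y $$ (i,j) - \<Phi> u Y $$ (i,j)) / of_real (- h)"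
        by simp
    qed
  qed
qed

lemma full_deriv: "0 < u \<Longrightarrow> Y \<in> carrier_mat d d \<Longrightarrow> i < d \<Longrightarrow> j < d \<Longrightarrow>
  ((\<lambda>v. \<Phi> v Y $$ (i,j)) has_vector_derivative \<Phi> u (L Y) $$ (i,j)) (at u)"
proof -
  assume u: "0 < u" and Y: "Y \<in> carrier_mat d d" and i: "i < d" and j: "j < d"
  let ?G = "\<lambda>y. (\<Phi> y Y $$ (i,j) - \<Phi> u Y $$ (i,j)) / of_real (y - u)"
  have R: "(?G \<longlongrightarrow> \<Phi> u (L Y) $$ (i,j)) (at_right u)"
    unfolding filterlim_at_right_to_0[of _ _ u]
    using right_deriv[OF _ Y i j, of u] u by (simp add: add.commute)
  have eqf: "(\<lambda>x. ?G (- (x + - u))) = (\<lambda>h. (\<Phi> (u - h) Y $$ (i,j) - \<Phi> u Y $$ (i,j)) / of_real (- h))"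
    by (rule ext) (simp add: algebra_simps)
  have Lf: "(?G \<longlongrightarrow> \<Phi> u (L Y) $$ (i,j)) (at_left u)"
    unfolding filterlim_at_left_to_right[of _ _ u] filterlim_at_right_to_0[of _ _ "- u"]
    unfolding eqf by (rule left_deriv[OF u Y i j])
  have "(?G \<longlongrightarrow> \<Phi> u (L Y) $$ (i,j)) (at u)"
    by (rule filterlim_split_at[OF Lf R])
  thus ?thesis by (simp add: hvd_iff)
qed


lemma cov_Phi_aux:
  assumes covL: "cov d L" and t: "0 < t" and X: "X \<in> carrier_mat d d" and i: "i < d" and j: "j < d"
  shows "\<Phi> t (Tw d a b X) $$ (i,j) = Tw d a b (\<Phi> t X) $$ (i,j)"
proof -
  define c where "c k l = om d (b * (int k - int l))" for k l :: nat
  define kk where "kk k = md d (int k - a)" for k :: nat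
  define g where "g s = (\<Sum>k<d. \<Sum>l<d. (c k l * \<Phi> s X $$ (kk k, kk l)) * \<Phi> (t - s) (Em d k l) $$ (i,j))" for s
  have TwE: "Tw d a b Y $$ (k,l) = c k l * Y $$ (kk k, kk l)" if "k < d" "l < d" for Y k l
    using that by (simp add: Tw_entry c_def kk_def)
  have kk_lt: "kk k < d" for k using dpos by (simp add: kk_def)
  have g0: "g 0 = \<Phi> t (Tw d a b X) $$ (i,j)"
  proof -
    have "\<Phi> t (Tw d a b X) $$ (i,j) = (\<Sum>k<d. \<Sum>l<d. Tw d a b X $$ (k,l) * \<Phi> t (Em d k l) $$ (i,j))"
      using t i j by (intro Em_expand_Phi) auto
    also have "\<dots> = g 0" unfolding g_def using Phi0[OF X] by (auto simp: TwE intro!: sum.cong)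
    finally show ?thesis by simp
  qed
  have gt: "g t = Tw d a b (\<Phi> t X) $$ (i,j)"
  proof -
    have "g t = (\<Sum>k<d. \<Sum>l<d. (c k l * \<Phi> t X $$ (kk k, kk l)) * (if k = i \<and> l = j then 1 else 0))"
      unfolding g_def using i j by (intro sum.cong refl) (auto simp: Phi0 Em_def)
    also have "\<dots> = c i j * \<Phi> t X $$ (kk i, kk j)" by (rule double_pick[OF i j])
    also have "\<dots> = Tw d a b (\<Phi> t X) $$ (i,j)" using TwE i j by simp
    finally show ?thesis .
  qed
  have c1: "continuous_on {0..t} (\<lambda>s. \<Phi> s X $$ (kk k, kk l))" for k l
    using Phi_cont[OF X kk_lt kk_lt] by (rule continuous_on_subset) auto
  have c2: "continuous_on {0..t} (\<lambda>s. \<Phi> (t - s) (Em d k l) $$ (i,j))" for k l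
    by (rule continuous_on_compose2[OF Phi_cont[OF Em_carrier i j], of _ "\<lambda>s. t - s"])
       (auto intro!: continuous_intros)
  have contg: "continuous_on {0..t} g"
    unfolding g_def by (intro continuous_on_sum continuous_on_mult continuous_on_const c1 c2)
  have dg: "(g has_vector_derivative 0) (at s)" if s: "0 < s" "s < t" for s
  proof -
    have s0: "0 \<le> s" and ts: "0 \<le> t - s" using s by auto
    have d1: "((\<lambda>s. c k l * \<Phi> s X $$ (kk k, kk l)) has_vector_derivative c k l * \<Phi> s (L X) $$ (kk k, kk l)) (at s)" for k l
      by (rule has_vector_derivative_eq_rhs[OF has_vector_derivative_mult[OF has_vector_derivative_const full_deriv[OF s(1) X kk_lt kk_lt]]]) simp
    have d2: "((\<lambda>s. \<Phi> (t - s) (Em d k l) $$ (i,j)) has_vector_derivative - \<Phi> (t - s) (L (Em d k l)) $$ (i,j)) (at s)" for k l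
    proof -
      have a: "((\<lambda>s. t - s) has_vector_derivative -1) (at s)"
        by (rule has_vector_derivative_eq_rhs[OF has_vector_derivative_diff[OF has_vector_derivative_const has_vector_derivative_id]]) simp
      have b: "((\<lambda>v. \<Phi> v (Em d k l) $$ (i,j)) has_vector_derivative \<Phi> (t - s) (L (Em d k l)) $$ (i,j)) (at ((\<lambda>s. t - s) s))"
        using full_deriv[OF _ Em_carrier i j, of "t - s"] s by simp
      from vector_diff_chain_at[OF a b] show ?thesis by (simp add: o_def)
    qed
    have d3: "(g has_vector_derivative (\<Sum>k<d. \<Sum>l<d. (c k l * \<Phi> s X $$ (kk k, kk l)) * (- \<Phi> (t - s) (L (Em d k l)) $$ (i,j))
         + (c k l * \<Phi> s (L X) $$ (kk k, kk l)) * \<Phi> (t - s) (Em d k l) $$ (i,j))) (at s)"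
      unfolding g_def by (intro has_vector_derivative_sum has_vector_derivative_mult d1 d2)
    let ?M = "Tw d a b (\<Phi> s X)" and ?N = "Tw d a b (\<Phi> s (L X))"
    have sX: "\<Phi> s X \<in> carrier_mat d d" using Phi_carrier[OF s0 X] .
    have sum1: "(\<Sum>k<d. \<Sum>l<d. (c k l * \<Phi> s X $$ (kk k, kk l)) * \<Phi> (t - s) (L (Em d k l)) $$ (i,j)) = \<Phi> (t - s) (L ?M) $$ (i,j)"
    proof -
      have "\<Phi> (t - s) (L ?M) $$ (i,j) = (\<Sum>k<d. \<Sum>l<d. ?M $$ (k,l) * \<Phi> (t - s) (L (Em d k l)) $$ (i,j))"
        using lin_expand[OF lin_comp[OF Phi_lin[OF ts] L_lin], of ?M i j] i j by simp
      thus ?thesis by (simp add: TwE)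
    qed
    have sum2: "(\<Sum>k<d. \<Sum>l<d. (c k l * \<Phi> s (L X) $$ (kk k, kk l)) * \<Phi> (t - s) (Em d k l) $$ (i,j)) = \<Phi> (t - s) ?N $$ (i,j)"
    proof -
      have "\<Phi> (t - s) ?N $$ (i,j) = (\<Sum>k<d. \<Sum>l<d. ?N $$ (k,l) * \<Phi> (t - s) (Em d k l) $$ (i,j))"
        using Em_expand_Phi[OF ts _ i j, of ?N] by simp
      thus ?thesis by (simp add: TwE)
    qed
    have MN: "L ?M = ?N"
      using covL sX comm[OF s0 X] unfolding cov_def by simp
    have "(\<Sum>k<d. \<Sum>l<d. (c k l * \<Phi> s X $$ (kk k, kk l)) * (- \<Phi> (t - s) (L (Em d k l)) $$ (i,j))
         + (c k l * \<Phi> s (L X) $$ (kk k, kk l)) * \<Phi> (t - s) (Em d k l) $$ (i,j))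
       = - (\<Sum>k<d. \<Sum>l<d. (c k l * \<Phi> s X $$ (kk k, kk l)) * \<Phi> (t - s) (L (Em d k l)) $$ (i,j))
         + (\<Sum>k<d. \<Sum>l<d. (c k l * \<Phi> s (L X) $$ (kk k, kk l)) * \<Phi> (t - s) (Em d k l) $$ (i,j))"
      by (simp add: sum.distrib sum_negf sum_subtractf)
    also have "\<dots> = 0" unfolding sum1 sum2 MN by simp
    finally show ?thesis using d3 by simp
  qed
  have "g t = g 0"
  proof (rule has_derivative_zero_unique_strong_interval[of "{0,t}" 0 t g])
    show "continuous_on {0..t} g" by (rule contg)
    fix x assume x: "x \<in> {0..t} - {0, t}"
    hence "0 < x" "x < t" by auto
    from has_vector_derivative_at_within[OF dg[OF this], of "{0..t}"]
    show "(g has_derivative (\<lambda>h. 0)) (at x within {0..t})"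
      by (simp add: has_vector_derivative_def)
  qed (use t in auto)
  thus ?thesis using g0 gt by simp
qed

lemma cov_Phi: "cov d L \<Longrightarrow> 0 \<le> t \<Longrightarrow> cov d (\<Phi> t)"
  unfolding cov_def
proof (intro allI ballI)
  fix a b and X :: "complex mat"
  assume covL: "\<forall>a b. \<forall>X\<in>carrier_mat d d. L (Tw d a b X) = Tw d a b (L X)" and t: "0 \<le> t"
    and X: "X \<in> carrier_mat d d"
  show "\<Phi> t (Tw d a b X) = Tw d a b (\<Phi> t X)"
  proof (cases "t = 0")
    case True
    then show ?thesis using Phi0[OF X] Phi0[of "Tw d a b X"] by simp
  next
    case False
    hence tp: "0 < t" using t by simp
    show ?thesis
    proof (rule eq_matI)
      fix i j assume "i < dim_row (Tw d a b (\<Phi> t X))" "j < dim_col (Tw d a b (\<Phi> t X))"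
      hence i: "i < d" and j: "j < d" by auto
      show "\<Phi> t (Tw d a b X) $$ (i,j) = Tw d a b (\<Phi> t X) $$ (i,j)"
        using cov_Phi_aux[OF _ tp X i j] covL unfolding cov_def by blast
    qed (use Phi_carrier[OF t, of "Tw d a b X"] in auto)
  qed
qed

lemma cov_L_of_Phi: "(\<forall>t\<ge>0. cov d (\<Phi> t)) \<Longrightarrow> cov d L"
  unfolding cov_def
proof (intro allI ballI)
  fix a b and X :: "complex mat"
  assume cP: "\<forall>t\<ge>0. \<forall>a b. \<forall>X\<in>carrier_mat d d. \<Phi> t (Tw d a b X) = Tw d a b (\<Phi> t X)"
    and X: "X \<in> carrier_mat d d"
  have TX: "Tw d a b X \<in> carrier_mat d d" by simp
  show "L (Tw d a b X) = Tw d a b (L X)"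
  proof (rule eq_matI)
    fix i j assume "i < dim_row (Tw d a b (L X))" "j < dim_col (Tw d a b (L X))"
    hence i: "i < d" and j: "j < d" by auto
    let ?c = "om d (b * (int i - int j))" and ?i = "md d (int i - a)" and ?j = "md d (int j - a)"
    have ii: "?i < d" "?j < d" using dpos by auto
    have lim2: "((\<lambda>h. ?c * ((\<Phi> h X $$ (?i,?j) - X $$ (?i,?j)) / of_real h)) \<longlongrightarrow> ?c * L X $$ (?i,?j)) (at_right 0)"
      by (intro tendsto_mult_left quot X ii)
    have "L (Tw d a b X) $$ (i,j) = ?c * L X $$ (?i,?j)"
    proof (rule lim_unique_right[OF quot[OF TX i j] lim2])
      show "\<forall>\<^sub>F h in at_right 0. (\<Phi> h (Tw d a b X) $$ (i, j) - Tw d a b X $$ (i, j)) / complex_of_real h =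
         ?c * ((\<Phi> h X $$ (?i,?j) - X $$ (?i,?j)) / of_real h)"
        using ev_pos
      proof (rule eventually_mono)
        fix h :: real assume h: "0 < h"
        have "\<Phi> h (Tw d a b X) = Tw d a b (\<Phi> h X)" using cP h X by auto
        thus "(\<Phi> h (Tw d a b X) $$ (i, j) - Tw d a b X $$ (i, j)) / complex_of_real h =
         ?c * ((\<Phi> h X $$ (?i,?j) - X $$ (?i,?j)) / of_real h)"
          using i j by (simp add: Tw_entry right_diff_distrib)
      qed
    qed
    thus "L (Tw d a b X) $$ (i,j) = Tw d a b (L X) $$ (i,j)" using i j by (simp add: Tw_entry)
  qed (use L_carrier[OF TX] in auto)
qed

end


definition chi :: "nat \<Rightarrow> (complex mat \<Rightarrow> complex mat) \<Rightarrow> int \<Rightarrow> int \<Rightarrow> complex" where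
  "chi d \<Psi> c e = (\<Sum>p<d. \<Sum>q<d. om d (e * (int q - int p)) * \<Psi> (Em d p q) $$ (md d (int p + c), md d (int q + c)))"

lemma md_cong: "0 < d \<Longrightarrow> x mod int d = y mod int d \<Longrightarrow> md d x = md d y"
  by (simp add: md_eq_iff)

lemma om_mult_cong: "0 < d \<Longrightarrow> x mod int d = y mod int d \<Longrightarrow> om d (b * x) = om d (b * y)"
  by (intro om_cong) (auto intro: mod_mult_cong)

lemma smult_one_mat[simp]: "(1::complex) \<cdot>\<^sub>m A = A"
  by (rule eq_matI) auto

lemma om_inj: "0 < d \<Longrightarrow> om d x = om d y \<Longrightarrow> x mod int d = y mod int d"
proof -
  assume d: "0 < d" and h: "om d x = om d y"
  have "om d (x - y) = om d x * om d (- y)" using om_add[of d x "- y"] by simp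
  also have "\<dots> = om d y * om d (- y)" using h by simp
  also have "\<dots> = 1" using om_add[of d y "- y"] by simp
  finally have "int d dvd (x - y)" using om_eq_1[OF d] by blast
  thus ?thesis by (simp add: mod_eq_dvd_iff)
qed

lemma modL: "((x::int) mod n - y + z) mod n = (x - y + z) mod n"
proof -
  have "((x mod n - y) + z) mod n = ((x mod n - y) mod n + z) mod n" by (simp add: mod_add_left_eq)
  also have "\<dots> = ((x - y) mod n + z) mod n" by (simp add: mod_diff_left_eq)
  also have "\<dots> = (x - y + z) mod n" by (simp add: mod_add_left_eq)
  finally show ?thesis .
qed

lemma reindex_md: "0 < d \<Longrightarrow> (\<Sum>k<d. g k) = (\<Sum>c<d. g (md d (int r - int c)))"
proof -
  assume d: "0 < d"
  let ?f = "\<lambda>c. md d (int r - int c)"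
  have inj: "inj_on ?f {..<d}"
  proof (rule inj_onI)
    fix x y assume x: "x \<in> {..<d}" and y: "y \<in> {..<d}" and e: "?f x = ?f y"
    hence "(int r - int x) mod int d = (int r - int y) mod int d" using d by (simp add: md_eq_iff)
    hence "int d dvd (int y - int x)" by (simp add: mod_eq_dvd_iff)
    hence "int x mod int d = int y mod int d" by (simp add: mod_eq_dvd_iff dvd_diff_commute)
    thus "x = y" using x y by simp
  qed
  have img: "?f ` {..<d} = {..<d}"
    by (rule endo_inj_surj) (use d inj in auto)
  have "(\<Sum>c<d. g (?f c)) = sum g (?f ` {..<d})"
    by (rule sum.reindex[OF inj, symmetric, unfolded o_def])
  thus ?thesis using img by simp
qed

lemma Tw_Em: "0 < d \<Longrightarrow> p < d \<Longrightarrow> q < d \<Longrightarrow>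
  Tw d a b (Em d p q) = om d (b * (int p - int q)) \<cdot>\<^sub>m Em d (md d (int p + a)) (md d (int q + a))"
proof (rule eq_matI)
  assume d: "0 < d" and p: "p < d" and q: "q < d"
  fix r s assume "r < dim_row (om d (b * (int p - int q)) \<cdot>\<^sub>m Em d (md d (int p + a)) (md d (int q + a)))"
    "s < dim_col (om d (b * (int p - int q)) \<cdot>\<^sub>m Em d (md d (int p + a)) (md d (int q + a)))"
  hence r: "r < d" and s: "s < d" by (auto simp: Em_def)
  have iff1: "md d (int r - a) = p \<longleftrightarrow> r = md d (int p + a)" using md_shift_iff[OF d p r] by auto
  have iff2: "md d (int s - a) = q \<longleftrightarrow> s = md d (int q + a)" using md_shift_iff[OF d q s] by auto
  have ph: "om d (b * (int (md d (int p + a)) - int (md d (int q + a)))) = om d (b * (int p - int q))"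
  proof (rule om_mult_cong[OF d])
    show "(int (md d (int p + a)) - int (md d (int q + a))) mod int d = (int p - int q) mod int d"
      using md_diff_mod[OF d, of "int p + a" "int q + a"] by simp
  qed
  show "Tw d a b (Em d p q) $$ (r,s) = (om d (b * (int p - int q)) \<cdot>\<^sub>m Em d (md d (int p + a)) (md d (int q + a))) $$ (r,s)"
    using r s d by (auto simp: Tw_entry Em_def iff1 iff2 ph)
qed (auto simp: Em_def)

context
  fixes d :: nat and \<Psi> :: "complex mat \<Rightarrow> complex mat"
  assumes dpos: "0 < d" and lin: "linear_on_Md d \<Psi>" and cv: "cov d \<Psi>"
begin

lemma Psi_carrier: "X \<in> carrier_mat d d \<Longrightarrow> \<Psi> X \<in> carrier_mat d d"
  using lin unfolding linear_on_Md_def by blast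

lemma Psi_smult: "X \<in> carrier_mat d d \<Longrightarrow> \<Psi> (k \<cdot>\<^sub>m X) = k \<cdot>\<^sub>m \<Psi> X"
  using lin unfolding linear_on_Md_def by blast

lemma covV: "p < d \<Longrightarrow> q < d \<Longrightarrow> r < d \<Longrightarrow> s < d \<Longrightarrow> \<Psi> (Em d p q) $$ (r,s) \<noteq> 0 \<Longrightarrow>
  (int p - int q) mod int d = (int r - int s) mod int d"
proof -
  assume p: "p < d" and q: "q < d" and r: "r < d" and s: "s < d" and nz: "\<Psi> (Em d p q) $$ (r,s) \<noteq> 0"
  have "\<Psi> (Tw d 0 1 (Em d p q)) = Tw d 0 1 (\<Psi> (Em d p q))" using cv unfolding cov_def by simp
  moreover have "Tw d 0 1 (Em d p q) = om d (int p - int q) \<cdot>\<^sub>m Em d p q"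
    using Tw_Em[OF dpos p q, of 0 1] p q by simp
  ultimately have eq: "om d (int p - int q) \<cdot>\<^sub>m \<Psi> (Em d p q) = Tw d 0 1 (\<Psi> (Em d p q))"
    using Psi_smult[of "Em d p q"] by simp
  have PE: "\<Psi> (Em d p q) \<in> carrier_mat d d" using Psi_carrier by simp
  have "(om d (int p - int q) \<cdot>\<^sub>m \<Psi> (Em d p q)) $$ (r,s) = Tw d 0 1 (\<Psi> (Em d p q)) $$ (r,s)"
    using eq by simp
  hence "om d (int p - int q) * \<Psi> (Em d p q) $$ (r,s) = om d (int r - int s) * \<Psi> (Em d p q) $$ (r,s)"
    using PE r s by (simp add: Tw_entry)
  hence "om d (int p - int q) = om d (int r - int s)" using nz by simp
  thus ?thesis by (rule om_inj[OF dpos])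
qed

lemma covU: "p < d \<Longrightarrow> q < d \<Longrightarrow> r < d \<Longrightarrow> s < d \<Longrightarrow>
  \<Psi> (Em d (md d (int p + a)) (md d (int q + a))) $$ (r,s) = \<Psi> (Em d p q) $$ (md d (int r - a), md d (int s - a))"
proof -
  assume p: "p < d" and q: "q < d" and r: "r < d" and s: "s < d"
  have "\<Psi> (Tw d a 0 (Em d p q)) = Tw d a 0 (\<Psi> (Em d p q))" using cv unfolding cov_def by simp
  moreover have "Tw d a 0 (Em d p q) = Em d (md d (int p + a)) (md d (int q + a))"
    using Tw_Em[OF dpos p q, of a 0] by simp
  ultimately have "\<Psi> (Em d (md d (int p + a)) (md d (int q + a))) $$ (r,s) = Tw d a 0 (\<Psi> (Em d p q)) $$ (r,s)"
    by simp
  thus ?thesis using r s by (simp add: Tw_entry)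
qed


lemma decomp_L1: "X \<in> carrier_mat d d \<Longrightarrow> r < d \<Longrightarrow> s < d \<Longrightarrow>
  \<Psi> X $$ (r,s) = (\<Sum>c<d. X $$ (md d (int r - int c), md d (int s - int c)) *
      \<Psi> (Em d (md d (int r - int c)) (md d (int s - int c))) $$ (r,s))"
proof -
  assume X: "X \<in> carrier_mat d d" and r: "r < d" and s: "s < d"
  define l0 where "l0 k = md d (int k - int r + int s)" for k :: nat
  have l0lt: "l0 k < d" for k using dpos by (simp add: l0_def)
  have inner: "(\<Sum>l<d. X $$ (k,l) * \<Psi> (Em d k l) $$ (r,s)) = X $$ (k, l0 k) * \<Psi> (Em d k (l0 k)) $$ (r,s)"
    if k: "k < d" for k
  proof -
    have "(\<Sum>l<d. X $$ (k,l) * \<Psi> (Em d k l) $$ (r,s)) = (\<Sum>l<d. if l = l0 k then X $$ (k,l) * \<Psi> (Em d k l) $$ (r,s) else 0)"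
    proof (rule sum.cong[OF refl])
      fix l assume l: "l \<in> {..<d}"
      show "X $$ (k,l) * \<Psi> (Em d k l) $$ (r,s) = (if l = l0 k then X $$ (k,l) * \<Psi> (Em d k l) $$ (r,s) else 0)"
      proof (cases "\<Psi> (Em d k l) $$ (r,s) = 0")
        case False
        hence "(int k - int l) mod int d = (int r - int s) mod int d" using covV k l r s by auto
        hence "int d dvd (int k - int r + int s - int l)" by (simp add: mod_eq_dvd_iff algebra_simps)
        hence "int l mod int d = (int k - int r + int s) mod int d" by (metis dvd_diff_commute mod_eq_dvd_iff)
        hence "l = l0 k" unfolding l0_def using l dpos by (metis md_cong md_nat lessThan_iff)
        thus ?thesis by simp
      qed auto
    qed
    also have "\<dots> = X $$ (k, l0 k) * \<Psi> (Em d k (l0 k)) $$ (r,s)" using l0lt by simp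
    finally show ?thesis .
  qed
  have "\<Psi> X $$ (r,s) = (\<Sum>k<d. \<Sum>l<d. X $$ (k,l) * \<Psi> (Em d k l) $$ (r,s))"
    by (rule lin_expand[OF lin X r s])
  also have "\<dots> = (\<Sum>k<d. X $$ (k, l0 k) * \<Psi> (Em d k (l0 k)) $$ (r,s))"
    by (rule sum.cong) (auto simp: inner)
  also have "\<dots> = (\<Sum>c<d. X $$ (md d (int r - int c), l0 (md d (int r - int c))) *
        \<Psi> (Em d (md d (int r - int c)) (l0 (md d (int r - int c)))) $$ (r,s))"
    by (rule reindex_md[OF dpos])
  also have "\<dots> = (\<Sum>c<d. X $$ (md d (int r - int c), md d (int s - int c)) *
      \<Psi> (Em d (md d (int r - int c)) (md d (int s - int c))) $$ (r,s))"
  proof (rule sum.cong[OF refl])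
    fix c assume c: "c \<in> {..<d}"
    have "l0 (md d (int r - int c)) = md d (int s - int c)"
      unfolding l0_def
    proof (rule md_cong[OF dpos])
      have "(int (md d (int r - int c)) - int r + int s) mod int d = (int r - int c - int r + int s) mod int d"
        by (simp only: int_md[OF dpos] modL)
      thus "(int (md d (int r - int c)) - int r + int s) mod int d = (int s - int c) mod int d" by simp
    qed
    thus "X $$ (md d (int r - int c), l0 (md d (int r - int c))) *
        \<Psi> (Em d (md d (int r - int c)) (l0 (md d (int r - int c)))) $$ (r,s) =
       X $$ (md d (int r - int c), md d (int s - int c)) *
      \<Psi> (Em d (md d (int r - int c)) (md d (int s - int c))) $$ (r,s)" by simp
  qed
  finally show ?thesis .
qed

lemma decomp_R1: "r < d \<Longrightarrow> s < d \<Longrightarrow> c < d \<Longrightarrow>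
  (\<Sum>e<d. chi d \<Psi> (int c) (int e) * om d (int e * (int r - int s))) =
   of_nat d * of_nat d * \<Psi> (Em d (md d (int r - int c)) (md d (int s - int c))) $$ (r,s)"
proof -
  assume r: "r < d" and s: "s < d" and c: "c < d"
  let ?K = "\<Psi> (Em d (md d (int r - int c)) (md d (int s - int c))) $$ (r,s)"
  let ?F = "\<lambda>p q. \<Psi> (Em d p q) $$ (md d (int p + int c), md d (int q + int c))"
  define q0 where "q0 p = md d (int p - int r + int s)" for p :: nat
  have q0lt: "q0 p < d" for p using dpos by (simp add: q0_def)
  have Fq0: "?F p (q0 p) = ?K" if p: "p < d" for p
  proof -
    define a where "a = int r - int c - int p"
    have "\<Psi> (Em d (md d (int p + a)) (md d (int (q0 p) + a))) $$ (r,s) = \<Psi> (Em d p (q0 p)) $$ (md d (int r - a), md d (int s - a))"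
      by (rule covU[OF p q0lt r s])
    moreover have "md d (int p + a) = md d (int r - int c)" by (simp add: a_def)
    moreover have "md d (int (q0 p) + a) = md d (int s - int c)"
    proof (rule md_cong[OF dpos])
      have "(int (q0 p) + a) mod int d = (int p - int r + int s + a) mod int d"
        by (simp add: q0_def int_md[OF dpos] mod_add_left_eq)
      thus "(int (q0 p) + a) mod int d = (int s - int c) mod int d" by (simp add: a_def algebra_simps)
    qed
    moreover have "md d (int r - a) = md d (int p + int c)" by (simp add: a_def algebra_simps)
    moreover have "md d (int s - a) = md d (int (q0 p) + int c)"
    proof (rule md_cong[OF dpos])
      have "(int (q0 p) + int c) mod int d = (int p - int r + int s + int c) mod int d"
        by (simp add: q0_def int_md[OF dpos] mod_add_left_eq)
      thus "(int s - a) mod int d = (int (q0 p) + int c) mod int d" by (simp add: a_def algebra_simps)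
    qed
    ultimately show ?thesis by simp
  qed
  have "(\<Sum>e<d. chi d \<Psi> (int c) (int e) * om d (int e * (int r - int s)))
     = (\<Sum>e<d. \<Sum>p<d. \<Sum>q<d. om d (int e * (int q - int p + int r - int s)) * ?F p q)"
    unfolding chi_def sum_distrib_right
  proof (intro sum.cong refl)
    fix e p q
    have omm: "om d (int e * (int q - int p)) * om d (int e * (int r - int s)) = om d (int e * (int q - int p + int r - int s))"
      by (simp add: om_add[symmetric] algebra_simps)
    show "om d (int e * (int q - int p)) * ?F p q * om d (int e * (int r - int s)) = om d (int e * (int q - int p + int r - int s)) * ?F p q"
      unfolding omm[symmetric] by (simp only: mult_ac)
  qed
  also have "\<dots> = (\<Sum>p<d. \<Sum>q<d. \<Sum>e<d. om d (int e * (int q - int p + int r - int s)) * ?F p q)"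
    by (subst sum.swap) (rule sum.cong[OF refl], rule sum.swap)
  also have "\<dots> = (\<Sum>p<d. \<Sum>q<d. (if int d dvd (int q - int p + int r - int s) then of_nat d else 0) * ?F p q)"
    by (simp add: sum_distrib_right[symmetric] om_sum[OF dpos])
  also have "\<dots> = (\<Sum>p<d. of_nat d * ?K)"
  proof (rule sum.cong[OF refl])
    fix p assume p: "p \<in> {..<d}"
    have "(\<Sum>q<d. (if int d dvd (int q - int p + int r - int s) then of_nat d else 0) * ?F p q)
       = (\<Sum>q<d. if int d dvd (int q - int p + int r - int s) then of_nat d * ?F p q else 0)"
      by (rule sum.cong) auto
    also have "\<dots> = of_nat d * ?F p (q0 p)"
    proof (rule sum_pick_gen[OF q0lt])
      fix q assume q: "q < d"
      have "int d dvd (int q - int p + int r - int s) \<longleftrightarrow> int q mod int d = (int p - int r + int s) mod int d"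
        by (simp add: mod_eq_dvd_iff algebra_simps)
      also have "\<dots> \<longleftrightarrow> q = q0 p"
        unfolding q0_def using q dpos by (metis md_eq_iff md_nat)
      finally show "int d dvd (int q - int p + int r - int s) \<longleftrightarrow> q = q0 p" .
    qed
    also have "\<dots> = of_nat d * ?K" using Fq0 p by simp
    finally show "(\<Sum>q<d. (if int d dvd (int q - int p + int r - int s) then of_nat d else 0) * ?F p q) = of_nat d * ?K" .
  qed
  also have "\<dots> = of_nat d * of_nat d * ?K" by simp
  finally show ?thesis .
qed

lemma decomp: "X \<in> carrier_mat d d \<Longrightarrow> r < d \<Longrightarrow> s < d \<Longrightarrow>
  of_nat d * of_nat d * \<Psi> X $$ (r,s) = (\<Sum>c<d. \<Sum>e<d. chi d \<Psi> (int c) (int e) * Tw d (int c) (int e) X $$ (r,s))"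
proof -
  assume X: "X \<in> carrier_mat d d" and r: "r < d" and s: "s < d"
  have "(\<Sum>c<d. \<Sum>e<d. chi d \<Psi> (int c) (int e) * Tw d (int c) (int e) X $$ (r,s))
    = (\<Sum>c<d. (\<Sum>e<d. chi d \<Psi> (int c) (int e) * om d (int e * (int r - int s))) * X $$ (md d (int r - int c), md d (int s - int c)))"
    using r s by (simp add: Tw_entry sum_distrib_right mult.assoc)
  also have "\<dots> = (\<Sum>c<d. of_nat d * of_nat d * (X $$ (md d (int r - int c), md d (int s - int c)) *
      \<Psi> (Em d (md d (int r - int c)) (md d (int s - int c))) $$ (r,s)))"
    by (rule sum.cong) (auto simp: decomp_R1[OF r s])
  also have "\<dots> = of_nat d * of_nat d * \<Psi> X $$ (r,s)"
    by (simp add: sum_distrib_left[symmetric] decomp_L1[OF X r s])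
  finally show ?thesis by simp
qed

end


lemma sum_block: "(\<Sum>j<k. g (a + j)) = sum g {a..<a + (k::nat)}"
proof (induct k)
  case 0 then show ?case by simp
next
  case (Suc k)
  have "sum g {a..<a + Suc k} = sum g {a..<a + k} + g (a + k)" by simp
  then show ?case using Suc by simp
qed

lemma sum_lessThan_add: "(\<Sum>i<a + (k::nat). f i) = (\<Sum>i<a. f i) + (\<Sum>j<k. f (a + j))"
  by (induct k) (simp_all add: add.assoc)

lemma sum_split: "(\<Sum>i<(n::nat)*d. f i) = (\<Sum>p<n. \<Sum>k<d. f (p*d + k))"
proof (induct n)
  case 0 then show ?case by simp
next
  case (Suc n)
  have "(\<Sum>i<Suc n * d. f i) = (\<Sum>i<n * d + d. f i)" by (simp add: add.commute)
  also have "\<dots> = (\<Sum>i<n*d. f i) + (\<Sum>k<d. f (n*d + k))" by (rule sum_lessThan_add)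
  finally show ?case using Suc by simp
qed

lemma sum_pick_val_r: "(c::nat) < m \<Longrightarrow> (\<Sum>k<m. f k * (if k = c then w else 0)) = (f c * w :: 'a::semiring_1)"
proof -
  assume c: "c < m"
  have "(\<Sum>k<m. f k * (if k = c then w else 0)) = (\<Sum>k<m. if k = c then f k * w else 0)"
    by (rule sum.cong) auto
  also have "\<dots> = f c * w" using c by simp
  finally show ?thesis .
qed

lemma sum_pick_val_l: "(c::nat) < m \<Longrightarrow> (\<Sum>k<m. (if k = c then w else 0) * f k) = (w * f c :: 'a::semiring_1)"
proof -
  assume c: "c < m"
  have "(\<Sum>k<m. (if k = c then w else 0) * f k) = (\<Sum>k<m. if k = c then w * f k else 0)"
    by (rule sum.cong) auto
  also have "\<dots> = w * f c" using c by simp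
  finally show ?thesis .
qed

lemma div_mod_block: "k < (d::nat) \<Longrightarrow> (p * d + k) div d = p" "k < d \<Longrightarrow> (p * d + k) mod d = k"
  by simp_all

lemma block_lt: "p < (d::nat) \<Longrightarrow> k < d \<Longrightarrow> p * d + k < d * d"
proof -
  assume "p < d" "k < d"
  hence "p * d + k < p * d + d" by simp
  also have "\<dots> = (p + 1) * d" by simp
  also have "\<dots> \<le> d * d" using \<open>p < d\<close> by (metis Suc_eq_plus1 Suc_leI mult_le_mono1)
  finally show ?thesis .
qed

definition X0 :: "nat \<Rightarrow> complex mat" where
  "X0 d = mat (d*d) (d*d) (\<lambda>(i,j). if i mod d = i div d \<and> j mod d = j div d then 1 else 0)"

lemma X0_psd: "psd (d*d) (X0 d)"
  unfolding psd_def
proof (intro conjI allI)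
  show "X0 d \<in> carrier_mat (d*d) (d*d)" by (simp add: X0_def)
  fix v :: "nat \<Rightarrow> complex"
  let ?P = "\<lambda>i. i mod d = i div d"
  let ?S = "\<Sum>j<d*d. if ?P j then v j else 0"
  have "(\<Sum>i<d*d. \<Sum>j<d*d. cnj (v i) * X0 d $$ (i,j) * v j)
      = (\<Sum>i<d*d. \<Sum>j<d*d. (if ?P i then cnj (v i) else 0) * (if ?P j then v j else 0))"
    by (intro sum.cong refl) (auto simp: X0_def)
  also have "\<dots> = (\<Sum>i<d*d. if ?P i then cnj (v i) else 0) * ?S"
    by (simp add: sum_product)
  also have "(\<Sum>i<d*d. if ?P i then cnj (v i) else 0) = cnj ?S"
    by (subst cnj_sum) (auto intro!: sum.cong)
  also have "cnj ?S * ?S = of_real ((norm ?S)\<^sup>2)"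
    using complex_norm_square[of ?S] by (simp only: mult.commute)
  finally have eq: "(\<Sum>i<d*d. \<Sum>j<d*d. cnj (v i) * X0 d $$ (i,j) * v j) = of_real ((norm ?S)\<^sup>2)" .
  show "Im (\<Sum>i<d*d. \<Sum>j<d*d. cnj (v i) * X0 d $$ (i,j) * v j) = 0" unfolding eq by simp
  show "0 \<le> Re (\<Sum>i<d*d. \<Sum>j<d*d. cnj (v i) * X0 d $$ (i,j) * v j)" unfolding eq by simp
qed

lemma ampl_X0: "p < d \<Longrightarrow> k < d \<Longrightarrow> q < d \<Longrightarrow> l < d \<Longrightarrow>
  ampliate d d \<Psi> (X0 d) $$ (p*d + k, q*d + l) = \<Psi> (Em d p q) $$ (k, l)"
proof -
  assume p: "p < d" and k: "k < d" and q: "q < d" and l: "l < d"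
  have blk: "mat d d (\<lambda>(k', l'). X0 d $$ (((p*d+k) div d) * d + k', ((q*d+l) div d) * d + l')) = Em d p q"
    by (rule eq_matI) (use p q k l in \<open>auto simp: X0_def Em_def block_lt\<close>)
  show ?thesis
    unfolding ampliate_def using blk block_lt[OF p k] block_lt[OF q l] k l by simp
qed

lemma chi_pos: "0 < d \<Longrightarrow> completely_positive d \<Psi> \<Longrightarrow> Im (chi d \<Psi> c e) = 0 \<and> 0 \<le> Re (chi d \<Psi> c e)"
proof -
  assume d: "0 < d" and cp: "completely_positive d \<Psi>"
  have ps: "psd (d*d) (ampliate d d \<Psi> (X0 d))" using cp X0_psd unfolding completely_positive_def by blast
  define v where "v i = (if i mod d = md d (int (i div d) + c) then om d (e * int (i div d)) else 0)" for i
  let ?A = "ampliate d d \<Psi> (X0 d)"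
  let ?Q = "\<Sum>i<d*d. \<Sum>j<d*d. cnj (v i) * ?A $$ (i,j) * v j"
  have Q: "Im ?Q = 0 \<and> 0 \<le> Re ?Q" using ps unfolding psd_def by blast
  let ?F = "\<lambda>p q. \<Psi> (Em d p q) $$ (md d (int p + c), md d (int q + c))"
  have vb: "v (p*d + k) = (if k = md d (int p + c) then om d (e * int p) else 0)" if "k < d" for p k
    using that by (simp add: v_def)
  have "?Q = (\<Sum>p<d. \<Sum>k<d. \<Sum>q<d. \<Sum>l<d. cnj (v (p*d+k)) * ?A $$ (p*d+k, q*d+l) * v (q*d+l))"
    by (simp add: sum_split)
  also have "\<dots> = (\<Sum>p<d. \<Sum>k<d. \<Sum>q<d. \<Sum>l<d.
        ((if k = md d (int p + c) then cnj (om d (e * int p)) else 0) * \<Psi> (Em d p q) $$ (k, l)) *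
        (if l = md d (int q + c) then om d (e * int q) else 0))"
    by (intro sum.cong refl) (simp add: vb ampl_X0)
  also have "\<dots> = (\<Sum>p<d. \<Sum>k<d. \<Sum>q<d.
        (if k = md d (int p + c) then cnj (om d (e * int p)) else 0) * (\<Psi> (Em d p q) $$ (k, md d (int q + c)) * om d (e * int q)))"
    by (intro sum.cong refl, subst sum_pick_val_r) (simp_all add: d mult.assoc)
  also have "\<dots> = (\<Sum>p<d. \<Sum>q<d. \<Sum>k<d.
        (if k = md d (int p + c) then cnj (om d (e * int p)) else 0) * (\<Psi> (Em d p q) $$ (k, md d (int q + c)) * om d (e * int q)))"
    by (rule sum.cong[OF refl], rule sum.swap)
  also have "\<dots> = (\<Sum>p<d. \<Sum>q<d. cnj (om d (e * int p)) * (?F p q * om d (e * int q)))"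
    using d by (intro sum.cong refl) (simp add: sum_pick_val_l)
  also have "\<dots> = chi d \<Psi> c e"
    unfolding chi_def
  proof (intro sum.cong refl)
    fix p q
    have "cnj (om d (e * int p)) * om d (e * int q) = om d (e * (int q - int p))"
      by (simp add: om_cnj om_add[symmetric] algebra_simps)
    thus "cnj (om d (e * int p)) * (?F p q * om d (e * int q)) = om d (e * (int q - int p)) * ?F p q"
      by (metis mult.commute mult.left_commute)
  qed
  finally show ?thesis using Q by simp
qed


lemma re_real: "Im z = 0 \<Longrightarrow> complex_of_real (Re z) = z"
  by (simp add: complex_eq_iff)

lemma Tw_cov_gen:
  assumes d: "0 < d"
    and MX: "\<forall>X\<in>carrier_mat d d. M X = mat d d (\<lambda>(i,j). \<Sum>k<n. w k * (Tw d (a k) (b k) X $$ (i,j) - \<beta> * X $$ (i,j)))"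
  shows "cov d M"
  unfolding cov_def
proof (intro allI ballI)
  fix a0 b0 and X :: "complex mat" assume X: "X \<in> carrier_mat d d"
  have TX: "Tw d a0 b0 X \<in> carrier_mat d d" by simp
  have MT: "M (Tw d a0 b0 X) = mat d d (\<lambda>(i,j). \<Sum>k<n. w k * (Tw d (a k) (b k) (Tw d a0 b0 X) $$ (i,j) - \<beta> * Tw d a0 b0 X $$ (i,j)))"
    using MX TX by blast
  have MXX: "M X = mat d d (\<lambda>(i,j). \<Sum>k<n. w k * (Tw d (a k) (b k) X $$ (i,j) - \<beta> * X $$ (i,j)))"
    using MX X by blast
  show "M (Tw d a0 b0 X) = Tw d a0 b0 (M X)"
  proof (rule eq_matI)
    fix r s assume "r < dim_row (Tw d a0 b0 (M X))" "s < dim_col (Tw d a0 b0 (M X))"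
    hence r: "r < d" and s: "s < d" by auto
    let ?r = "md d (int r - a0)" and ?s = "md d (int s - a0)" and ?c = "om d (b0 * (int r - int s))"
    have rs: "?r < d" "?s < d" using d by auto
    have comm: "Tw d (a k) (b k) (Tw d a0 b0 X) = Tw d a0 b0 (Tw d (a k) (b k) X)" for k
      by (rule Tw_comm[OF d])
    have "M (Tw d a0 b0 X) $$ (r,s) = (\<Sum>k<n. w k * (Tw d (a k) (b k) (Tw d a0 b0 X) $$ (r,s) - \<beta> * Tw d a0 b0 X $$ (r,s)))"
      unfolding MT using r s by simp
    also have "\<dots> = (\<Sum>k<n. w k * (?c * Tw d (a k) (b k) X $$ (?r,?s) - \<beta> * (?c * X $$ (?r,?s))))"
      using r s by (simp add: comm Tw_entry)
    also have "\<dots> = ?c * (\<Sum>k<n. w k * (Tw d (a k) (b k) X $$ (?r,?s) - \<beta> * X $$ (?r,?s)))"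
      by (simp add: sum_distrib_left algebra_simps)
    also have "\<dots> = Tw d a0 b0 (M X) $$ (r,s)"
      unfolding MXX using r s rs by (simp add: Tw_entry)
    finally show "M (Tw d a0 b0 X) $$ (r,s) = Tw d a0 b0 (M X) $$ (r,s)" .
  qed (simp_all add: MT MXX)
qed

lemma mixed_cov: "0 < d \<Longrightarrow> mixed_weyl_unitary d \<Psi> \<Longrightarrow> cov d \<Psi>"
proof -
  assume d: "0 < d" and m: "mixed_weyl_unitary d \<Psi>"
  obtain n :: nat and lam ab where eq: "\<forall>X \<in> carrier_mat d d. \<Psi> X = mat d d (\<lambda>(i,j). \<Sum>k<n. complex_of_real (lam k) *
            ((weyl d (fst (ab k)) (snd (ab k)) * X * mat_adjoint (weyl d (fst (ab k)) (snd (ab k)))) $$ (i,j)))"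
    using m unfolding mixed_weyl_unitary_def by (elim exE conjE) (erule that)
  show ?thesis
  proof (rule Tw_cov_gen[OF d, where w = "\<lambda>k. complex_of_real (lam k)" and a = "\<lambda>k. int (fst (ab k))"
        and b = "\<lambda>k. int (snd (ab k))" and \<beta> = 0 and n = n])
    show "\<forall>X\<in>carrier_mat d d. \<Psi> X = mat d d (\<lambda>(i,j). \<Sum>k<n. complex_of_real (lam k) *
       (Tw d (int (fst (ab k))) (int (snd (ab k))) X $$ (i,j) - 0 * X $$ (i,j)))"
      using eq by (simp add: weyl_conj[OF d])
  qed
qed

lemma comb_cov: "0 < d \<Longrightarrow> nonneg_comb_Ad_minus_id d L \<Longrightarrow> cov d L"
proof -
  assume d: "0 < d" and m: "nonneg_comb_Ad_minus_id d L"
  obtain n :: nat and c ab where eq: "\<forall>X \<in> carrier_mat d d. L X = mat d d (\<lambda>(i,j). \<Sum>k<n. complex_of_real (c k) *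
            ((Ad (weyl d (fst (ab k)) (snd (ab k))) X - X) $$ (i,j)))"
    using m unfolding nonneg_comb_Ad_minus_id_def by (elim exE conjE) (erule that)
  show ?thesis
  proof (rule Tw_cov_gen[OF d, where w = "\<lambda>k. complex_of_real (c k)" and a = "\<lambda>k. - int (fst (ab k))"
        and b = "\<lambda>k. - int (snd (ab k))" and \<beta> = 1 and n = n], intro ballI)
    fix X :: "complex mat" assume X: "X \<in> carrier_mat d d"
    show "L X = mat d d (\<lambda>(i,j). \<Sum>k<n. complex_of_real (c k) *
       (Tw d (- int (fst (ab k))) (- int (snd (ab k))) X $$ (i,j) - 1 * X $$ (i,j)))"
      unfolding eq[rule_format, OF X]
      by (rule eq_matI) (use X in \<open>auto simp: Ad_weyl[OF d X] intro!: sum.cong\<close>)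
  qed
qed

lemma weyl_cov_iff: "0 < d \<Longrightarrow> (\<forall>X\<in>carrier_mat d d. \<Psi> X \<in> carrier_mat d d) \<Longrightarrow>
  weyl_covariant d \<Psi> \<longleftrightarrow> cov d \<Psi>"
proof
  assume d: "0 < d" and car: "\<forall>X\<in>carrier_mat d d. \<Psi> X \<in> carrier_mat d d" and w: "weyl_covariant d \<Psi>"
  show "cov d \<Psi>" unfolding cov_def
  proof (intro allI ballI)
    fix a b and X :: "complex mat" assume X: "X \<in> carrier_mat d d"
    have a: "md d a < d" and b: "md d b < d" using d by auto
    have "\<Psi> (Tw d a b X) = \<Psi> (Tw d (int (md d a)) (int (md d b)) X)" using Tw_mod[OF d] by metis
    also have "\<dots> = \<Psi> (weyl d (md d a) (md d b) * X * mat_adjoint (weyl d (md d a) (md d b)))"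
      using weyl_conj[OF d X] by simp
    also have "\<dots> = weyl d (md d a) (md d b) * \<Psi> X * mat_adjoint (weyl d (md d a) (md d b))"
      using w a b X unfolding weyl_covariant_def by blast
    also have "\<dots> = Tw d (int (md d a)) (int (md d b)) (\<Psi> X)"
      using weyl_conj[OF d] car X by blast
    also have "\<dots> = Tw d a b (\<Psi> X)" using Tw_mod[OF d] by metis
    finally show "\<Psi> (Tw d a b X) = Tw d a b (\<Psi> X)" .
  qed
next
  assume d: "0 < d" and car: "\<forall>X\<in>carrier_mat d d. \<Psi> X \<in> carrier_mat d d" and c: "cov d \<Psi>"
  show "weyl_covariant d \<Psi>" unfolding weyl_covariant_def
  proof (intro allI impI ballI)
    fix a b and X :: "complex mat" assume X: "X \<in> carrier_mat d d"
    show "\<Psi> (weyl d a b * X * mat_adjoint (weyl d a b)) = weyl d a b * \<Psi> X * mat_adjoint (weyl d a b)"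
      using c X car weyl_conj[OF d X] weyl_conj[OF d, of "\<Psi> X"] unfolding cov_def by auto
  qed
qed

lemma sum_dd: "(\<Sum>k<d*d. f (k div d) (k mod d)) = (\<Sum>p<d. \<Sum>q<(d::nat). f p q)"
  by (simp add: sum_split)

lemma dd_bounds: "k < d * d \<Longrightarrow> k div d < (d::nat)" "k < d * d \<Longrightarrow> k mod d < d"
  by (simp_all add: less_mult_imp_div_less) (metis mod_less_divisor mult_zero_left not_gr0 not_less_zero)

lemma mixed_of_cov:
  assumes d: "0 < d" and lin: "linear_on_Md d \<Psi>" and cv: "cov d \<Psi>" and cp: "completely_positive d \<Psi>"
    and un: "\<Psi> (1\<^sub>m d) = 1\<^sub>m d"
  shows "mixed_weyl_unitary d \<Psi>"
proof -
  let ?ch = "\<lambda>p q. chi d \<Psi> (int p) (int q)"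
  have pos: "Im (?ch p q) = 0 \<and> 0 \<le> Re (?ch p q)" for p q using chi_pos[OF d cp] by blast
  have real: "complex_of_real (Re (?ch p q)) = ?ch p q" for p q using pos re_real by blast
  have dd0: "(0::nat) < d" using d .
  have "of_nat d * of_nat d * \<Psi> (1\<^sub>m d) $$ (0,0) = (\<Sum>p<d. \<Sum>q<d. ?ch p q * Tw d (int p) (int q) (1\<^sub>m d) $$ (0,0))"
    by (rule decomp[OF d lin cv]) (use d in auto)
  hence tot: "(\<Sum>p<d. \<Sum>q<d. ?ch p q) = of_nat d * of_nat d" using d by (simp add: un Tw_one)
  define lam where "lam k = Re (?ch (k div d) (k mod d)) / (real d * real d)" for k
  define ab where "ab k = (k div d, k mod d)" for k
  show ?thesis unfolding mixed_weyl_unitary_def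
  proof (intro exI[of _ "d*d"] exI[of _ lam] exI[of _ ab] conjI allI impI ballI)
    fix k assume k: "k < d * d"
    show "0 \<le> lam k" unfolding lam_def using pos by simp
    show "fst (ab k) < d" "snd (ab k) < d" unfolding ab_def using dd_bounds[OF k] by auto
  next
    have "(\<Sum>k<d*d. lam k) = (\<Sum>p<d. \<Sum>q<d. Re (?ch p q) / (real d * real d))"
      unfolding lam_def by (rule sum_dd)
    also have "\<dots> = Re (\<Sum>p<d. \<Sum>q<d. ?ch p q) / (real d * real d)"
      by (simp add: sum_divide_distrib)
    also have "\<dots> = 1" unfolding tot using d by simp
    finally show "(\<Sum>k<d*d. lam k) = 1" .
  next
    fix X :: "complex mat" assume X: "X \<in> carrier_mat d d"
    show "\<Psi> X = mat d d (\<lambda>(i,j). \<Sum>k<d*d. complex_of_real (lam k) *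
        ((weyl d (fst (ab k)) (snd (ab k)) * X * mat_adjoint (weyl d (fst (ab k)) (snd (ab k)))) $$ (i,j)))"
    proof (rule eq_matI)
      fix i j assume "i < dim_row (mat d d (\<lambda>(i,j). \<Sum>k<d*d. complex_of_real (lam k) *
        ((weyl d (fst (ab k)) (snd (ab k)) * X * mat_adjoint (weyl d (fst (ab k)) (snd (ab k)))) $$ (i,j))))"
        "j < dim_col (mat d d (\<lambda>(i,j). \<Sum>k<d*d. complex_of_real (lam k) *
        ((weyl d (fst (ab k)) (snd (ab k)) * X * mat_adjoint (weyl d (fst (ab k)) (snd (ab k)))) $$ (i,j))))"
      hence i: "i < d" and j: "j < d" by auto
      have "(\<Sum>k<d*d. complex_of_real (lam k) *
          ((weyl d (fst (ab k)) (snd (ab k)) * X * mat_adjoint (weyl d (fst (ab k)) (snd (ab k)))) $$ (i,j)))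
        = (\<Sum>k<d*d. complex_of_real (Re (?ch (k div d) (k mod d)) / (real d * real d)) * Tw d (int (k div d)) (int (k mod d)) X $$ (i,j))"
        unfolding lam_def ab_def using weyl_conj[OF d X] by simp
      also have "\<dots> = (\<Sum>p<d. \<Sum>q<d. complex_of_real (Re (?ch p q) / (real d * real d)) * Tw d (int p) (int q) X $$ (i,j))"
        by (rule sum_dd)
      also have "\<dots> = (\<Sum>p<d. \<Sum>q<d. ?ch p q * Tw d (int p) (int q) X $$ (i,j)) / (of_nat d * of_nat d)"
        by (simp add: sum_divide_distrib real)
      also have "\<dots> = \<Psi> X $$ (i,j)"
        unfolding decomp[OF d lin cv X i j, symmetric] using d by simp
      finally show "\<Psi> X $$ (i,j) = mat d d (\<lambda>(i,j). \<Sum>k<d*d. complex_of_real (lam k) *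
        ((weyl d (fst (ab k)) (snd (ab k)) * X * mat_adjoint (weyl d (fst (ab k)) (snd (ab k)))) $$ (i,j))) $$ (i,j)"
        using i j by simp
    qed (use lin X in \<open>auto simp: linear_on_Md_def\<close>)
  qed
qed


lemma chi_id0: "0 < d \<Longrightarrow> c < d \<Longrightarrow> e < d \<Longrightarrow> (c,e) \<noteq> (0,0) \<Longrightarrow> chi d (\<lambda>X. X) (int c) (int e) = 0"
proof -
  assume d: "0 < d" and c: "c < d" and e: "e < d" and ne: "(c,e) \<noteq> (0,0)"
  show ?thesis
  proof (cases "c = 0")
    case False
    have z: "Em d p q $$ (md d (int p + int c), md d (int q + int c)) = 0" if pq: "p < d" "q < d" for p q
    proof -
      have "md d (int p + int c) \<noteq> p"
      proof
        assume "md d (int p + int c) = p"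
        hence "(int p + int c) mod int d = int p mod int d" using d pq by (metis md_eq_iff md_nat)
        hence "int d dvd int c" by (simp add: mod_eq_dvd_iff)
        hence "d dvd c" by simp
        thus False using False c by (simp add: nat_dvd_not_less)
      qed
      thus ?thesis using pq d by (simp add: Em_def)
    qed
    have "chi d (\<lambda>X. X) (int c) (int e) = (\<Sum>p<d. \<Sum>q<d. (0::complex))"
      unfolding chi_def by (intro sum.cong refl) (simp add: z)
    thus ?thesis by simp
  next
    case True
    hence e0: "e \<noteq> 0" using ne by simp
    have nd: "\<not> int d dvd int e" using e0 e by (simp add: nat_dvd_not_less)
    have "chi d (\<lambda>X. X) (int c) (int e) = (\<Sum>p<d. \<Sum>q<d. om d (int e * (int q - int p)))"
      unfolding chi_def True by (intro sum.cong refl) (simp add: Em_def)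
    also have "\<dots> = (\<Sum>p<d. om d (- (int e * int p)) * (\<Sum>q<d. om d (int q * int e)))"
      by (simp add: sum_distrib_left om_add[symmetric] algebra_simps)
    also have "\<dots> = 0" using om_sum[OF d, of "int e"] nd by simp
    finally show ?thesis .
  qed
qed

lemma Ad_rev: "0 < d \<Longrightarrow> c < d \<Longrightarrow> e < d \<Longrightarrow> X \<in> carrier_mat d d \<Longrightarrow>
  Ad (weyl d (md d (- int c)) (md d (- int e))) X = Tw d (int c) (int e) X"
proof -
  assume d: "0 < d" and c: "c < d" and e: "e < d" and X: "X \<in> carrier_mat d d"
  have mm: "md d (- int (md d (- int x))) = x" if "x < d" for x
  proof -
    have "md d (- int (md d (- int x))) = md d (int x)"
    proof (rule md_cong[OF d])
      have "int (md d (- int x)) = (- int x) mod int d" by (rule int_md[OF d])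
      hence "(- int (md d (- int x))) mod int d = (- ((- int x) mod int d)) mod int d" by simp
      also have "\<dots> = (- (- int x)) mod int d" by (rule mod_minus_eq)
      finally show "(- int (md d (- int x))) mod int d = int x mod int d" by simp
    qed
    thus ?thesis using that by simp
  qed
  have "Ad (weyl d (md d (- int c)) (md d (- int e))) X = Tw d (- int (md d (- int c))) (- int (md d (- int e))) X"
    by (rule Ad_weyl[OF d X])
  also have "\<dots> = Tw d (int (md d (- int (md d (- int c))))) (int (md d (- int (md d (- int e))))) X"
    by (rule Tw_mod[OF d])
  also have "\<dots> = Tw d (int c) (int e) X" using mm c e by simp
  finally show ?thesis .
qed

context sg
begin

lemma chiL_pos: "cov d L \<Longrightarrow> c < d \<Longrightarrow> e < d \<Longrightarrow> (c,e) \<noteq> (0,0) \<Longrightarrow>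
   Im (chi d L (int c) (int e)) = 0 \<and> 0 \<le> Re (chi d L (int c) (int e))"
proof -
  assume covL: "cov d L" and c: "c < d" and e: "e < d" and ne: "(c,e) \<noteq> (0,0)"
  let ?x = "\<lambda>p. md d (int p + int c)" and ?y = "\<lambda>q. md d (int q + int c)"
  let ?F = "\<lambda>h. chi d (\<Phi> h) (int c) (int e) / of_real h"
  have xy: "?x p < d" "?y q < d" for p q using dpos by auto
  have lim0: "((\<lambda>h. \<Sum>p<d. \<Sum>q<d. om d (int e * (int q - int p)) *
      ((\<Phi> h (Em d p q) $$ (?x p, ?y q) - Em d p q $$ (?x p, ?y q)) / of_real h))
     \<longlongrightarrow> chi d L (int c) (int e)) (at_right 0)"
    unfolding chi_def by (intro tendsto_sum tendsto_mult_left quot Em_carrier xy)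
  have id0: "(\<Sum>p<d. \<Sum>q<d. om d (int e * (int q - int p)) * Em d p q $$ (?x p, ?y q)) = 0"
    using chi_id0[OF dpos c e ne] unfolding chi_def by simp
  have lim: "(?F \<longlongrightarrow> chi d L (int c) (int e)) (at_right 0)"
  proof (rule Lim_transform_eventually[OF lim0])
    show "\<forall>\<^sub>F h in at_right 0. (\<Sum>p<d. \<Sum>q<d. om d (int e * (int q - int p)) *
      ((\<Phi> h (Em d p q) $$ (?x p, ?y q) - Em d p q $$ (?x p, ?y q)) / of_real h)) = ?F h"
    proof (rule always_eventually, intro allI)
      fix h :: real
      have "(\<Sum>p<d. \<Sum>q<d. om d (int e * (int q - int p)) *
        ((\<Phi> h (Em d p q) $$ (?x p, ?y q) - Em d p q $$ (?x p, ?y q)) / of_real h))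
        = ((\<Sum>p<d. \<Sum>q<d. om d (int e * (int q - int p)) * \<Phi> h (Em d p q) $$ (?x p, ?y q))
          - (\<Sum>p<d. \<Sum>q<d. om d (int e * (int q - int p)) * Em d p q $$ (?x p, ?y q))) / of_real h"
        by (simp add: sum_divide_distrib sum_subtractf right_diff_distrib diff_divide_distrib)
      thus "(\<Sum>p<d. \<Sum>q<d. om d (int e * (int q - int p)) *
        ((\<Phi> h (Em d p q) $$ (?x p, ?y q) - Em d p q $$ (?x p, ?y q)) / of_real h)) = ?F h"
        unfolding id0 chi_def by simp
    qed
  qed
  have evpos: "\<forall>\<^sub>F h in at_right 0. Im (?F h) = 0 \<and> 0 \<le> Re (?F h)"
    using ev_pos
  proof (rule eventually_mono)
    fix h :: real assume h: "0 < h"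
    have "Im (chi d (\<Phi> h) (int c) (int e)) = 0 \<and> 0 \<le> Re (chi d (\<Phi> h) (int c) (int e))"
      using chi_pos[OF dpos Phi_CP] h by simp
    thus "Im (?F h) = 0 \<and> 0 \<le> Re (?F h)" using h by simp
  qed
  have "((\<lambda>h. Im (?F h)) \<longlongrightarrow> Im (chi d L (int c) (int e))) (at_right 0)" by (rule tendsto_Im[OF lim])
  moreover have "((\<lambda>h. Im (?F h)) \<longlongrightarrow> 0) (at_right 0)"
    by (rule Lim_transform_eventually[OF tendsto_const]) (use evpos in \<open>auto elim: eventually_mono\<close>)
  ultimately have "Im (chi d L (int c) (int e)) = 0"
    using tendsto_unique[OF trivial_limit_at_right_real] by blast
  moreover have "0 \<le> Re (chi d L (int c) (int e))"
    by (rule tendsto_lowerbound[OF tendsto_Re[OF lim]]) (use evpos in \<open>auto elim: eventually_mono\<close>)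
  ultimately show ?thesis by simp
qed

lemma comb_of_covL: "cov d L \<Longrightarrow> nonneg_comb_Ad_minus_id d L"
proof -
  assume covL: "cov d L"
  let ?ch = "\<lambda>p q. chi d L (int p) (int q)"
  define cf where "cf p q = (if p = 0 \<and> q = 0 then 0 else Re (?ch p q))" for p q :: nat
  have cf_nn: "0 \<le> cf p q" if "p < d" "q < d" for p q
    using chiL_pos[OF covL that] unfolding cf_def by auto
  have trm: "?ch p q * (Tw d (int p) (int q) X $$ (i,j) - X $$ (i,j)) = of_real (cf p q) * (Tw d (int p) (int q) X $$ (i,j) - X $$ (i,j))"
    if "p < d" "q < d" "X \<in> carrier_mat d d" "i < d" "j < d" for p q X i j
  proof (cases "p = 0 \<and> q = 0")
    case True
    then show ?thesis using Tw_00[OF that(3)] by simp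
  next
    case False
    hence "(p,q) \<noteq> (0,0)" by simp
    then show ?thesis using chiL_pos[OF covL that(1,2)] re_real False unfolding cf_def by auto
  qed
  have "of_nat d * of_nat d * L (1\<^sub>m d) $$ (0,0) = (\<Sum>p<d. \<Sum>q<d. ?ch p q * Tw d (int p) (int q) (1\<^sub>m d) $$ (0,0))"
    by (rule decomp[OF dpos L_lin covL]) (use dpos in auto)
  hence tot: "(\<Sum>p<d. \<Sum>q<d. ?ch p q) = 0" using dpos by (simp add: L_one Tw_one)
  have key: "of_nat d * of_nat d * L X $$ (i,j) = (\<Sum>p<d. \<Sum>q<d. of_real (cf p q) * (Tw d (int p) (int q) X $$ (i,j) - X $$ (i,j)))"
    if X: "X \<in> carrier_mat d d" and i: "i < d" and j: "j < d" for X i j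
  proof -
    have "of_nat d * of_nat d * L X $$ (i,j) = (\<Sum>p<d. \<Sum>q<d. ?ch p q * Tw d (int p) (int q) X $$ (i,j))"
      by (rule decomp[OF dpos L_lin covL X i j])
    also have "\<dots> = (\<Sum>p<d. \<Sum>q<d. ?ch p q * (Tw d (int p) (int q) X $$ (i,j) - X $$ (i,j)) + ?ch p q * X $$ (i,j))"
      by (intro sum.cong refl) (simp add: algebra_simps)
    also have "\<dots> = (\<Sum>p<d. \<Sum>q<d. ?ch p q * (Tw d (int p) (int q) X $$ (i,j) - X $$ (i,j))) + (\<Sum>p<d. \<Sum>q<d. ?ch p q) * X $$ (i,j)"
      by (simp only: sum.distrib sum_distrib_right)
    also have "\<dots> = (\<Sum>p<d. \<Sum>q<d. ?ch p q * (Tw d (int p) (int q) X $$ (i,j) - X $$ (i,j)))"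
      unfolding tot by simp
    also have "\<dots> = (\<Sum>p<d. \<Sum>q<d. of_real (cf p q) * (Tw d (int p) (int q) X $$ (i,j) - X $$ (i,j)))"
      by (intro sum.cong refl) (use X i j in \<open>simp add: trm\<close>)
    finally show ?thesis .
  qed
  define cc where "cc k = cf (k div d) (k mod d) / (real d * real d)" for k
  define ab where "ab k = (md d (- int (k div d)), md d (- int (k mod d)))" for k
  show ?thesis unfolding nonneg_comb_Ad_minus_id_def
  proof (intro exI[of _ "d*d"] exI[of _ cc] exI[of _ ab] conjI allI impI ballI)
    fix k assume k: "k < d * d"
    show "0 \<le> cc k" unfolding cc_def using cf_nn dd_bounds[OF k] by simp
    show "fst (ab k) < d" "snd (ab k) < d" unfolding ab_def using dpos by auto
  next
    fix X :: "complex mat" assume X: "X \<in> carrier_mat d d"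
    let ?R = "mat d d (\<lambda>(i,j). \<Sum>k<d*d. complex_of_real (cc k) * ((Ad (weyl d (fst (ab k)) (snd (ab k))) X - X) $$ (i,j)))"
    show "L X = ?R"
    proof (rule eq_matI)
      fix i j assume "i < dim_row ?R" "j < dim_col ?R"
      hence i: "i < d" and j: "j < d" by auto
      have "?R $$ (i,j) = (\<Sum>k<d*d. complex_of_real (cf (k div d) (k mod d) / (real d * real d)) *
          (Tw d (int (k div d)) (int (k mod d)) X $$ (i,j) - X $$ (i,j)))"
        using i j X dpos by (auto simp: cc_def ab_def Ad_rev dd_bounds intro!: sum.cong)
      also have "\<dots> = (\<Sum>p<d. \<Sum>q<d. complex_of_real (cf p q / (real d * real d)) *
          (Tw d (int p) (int q) X $$ (i,j) - X $$ (i,j)))"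
        by (rule sum_dd)
      also have "\<dots> = (\<Sum>p<d. \<Sum>q<d. of_real (cf p q) * (Tw d (int p) (int q) X $$ (i,j) - X $$ (i,j))) / (of_nat d * of_nat d)"
        by (simp add: sum_divide_distrib)
      also have "\<dots> = L X $$ (i,j)"
        unfolding key[OF X i j, symmetric] using dpos by simp
      finally show "L X $$ (i,j) = ?R $$ (i,j)" by simp
    qed (use L_carrier[OF X] in auto)
  qed
qed

end

theorem theorem6p4:
  fixes d :: nat and \<Phi> :: "real \<Rightarrow> complex mat \<Rightarrow> complex mat" and L :: "complex mat \<Rightarrow> complex mat"
  assumes "0 < d"
    and "qds_unital d \<Phi>"
    and "generator d \<Phi> L"
  shows "((\<forall>t\<ge>0. mixed_weyl_unitary d (\<Phi> t)) \<longleftrightarrow> nonneg_comb_Ad_minus_id d L)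
       \<and> (nonneg_comb_Ad_minus_id d L \<longleftrightarrow> weyl_covariant d L)"
proof -
  interpret sg d \<Phi> L using assms by unfold_locales
  have carL: "\<forall>X\<in>carrier_mat d d. L X \<in> carrier_mat d d" using L_carrier by blast
  have i_cov: "(\<forall>t\<ge>0. mixed_weyl_unitary d (\<Phi> t)) \<longleftrightarrow> cov d L"
  proof
    assume "\<forall>t\<ge>0. mixed_weyl_unitary d (\<Phi> t)"
    hence "\<forall>t\<ge>0. cov d (\<Phi> t)" using mixed_cov[OF assms(1)] by blast
    thus "cov d L" by (rule cov_L_of_Phi)
  next
    assume c: "cov d L"
    show "\<forall>t\<ge>0. mixed_weyl_unitary d (\<Phi> t)"
    proof (intro allI impI)
      fix t :: real assume t: "0 \<le> t"
      show "mixed_weyl_unitary d (\<Phi> t)"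
        by (rule mixed_of_cov[OF assms(1) Phi_lin[OF t] cov_Phi[OF c t] Phi_CP[OF t] Phi_unit[OF t]])
    qed
  qed
  have ii_cov: "nonneg_comb_Ad_minus_id d L \<longleftrightarrow> cov d L"
    using comb_cov[OF assms(1)] comb_of_covL by blast
  have iii_cov: "weyl_covariant d L \<longleftrightarrow> cov d L" by (rule weyl_cov_iff[OF assms(1) carL])
  show ?thesis using i_cov ii_cov iii_cov by blast
qed


end
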